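(* Let $\{S_i\mid i\in I\}$ be a collection of semigroups and let $F=\prod^{*}\{S_i\mid i\in I\}$ be their semigroup free product. Then $F^1$ is weakly right coherent if and only if each $S_i^1$ ($i\in I$) is weakly right coherent.
   Context: For a semigroup $S$, $S^1$ denotes $S$ if $S$ is a monoid and otherwise $S$ with an identity adjoined. A monoid $M$ is weakly right coherent (WRC) if every finitely generated right ideal of $M$ is finitely presented as a right $M$-act (known to be equivalent to: $M$ is right ideal Howson, i.e. the intersection of any two finitely generated right ideals is finitely generated, and finitely right equated, i.e. every $\mathbf{r}_M(a)=\{(s,t)\mid as=at\}$ is finitely generated as a right congruence). The semigroup free product of pairwise disjoint semigroups $S_i$ consists of sequences $s_1*\dots*s_n$ with $s_j\in\bigsqcup S_i$ and consecutive entries from different $S_i$, multiplied by concatenation, multiplying the two adjacent entries if they lie in the same $S_i$. *)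

theory Defs
  imports "HOL-Algebra.Group"
begin

(* A semigroup: carrier closed under an associative multiplication (the "one" field is ignored). *)
definition is_semigroup :: "('a, 'b) monoid_scheme \<Rightarrow> bool" where
  "is_semigroup S \<longleftrightarrow>
     (\<forall>x\<in>carrier S. \<forall>y\<in>carrier S. x \<otimes>\<^bsub>S\<^esub> y \<in> carrier S) \<and>
     (\<forall>x\<in>carrier S. \<forall>y\<in>carrier S. \<forall>z\<in>carrier S.
        (x \<otimes>\<^bsub>S\<^esub> y) \<otimes>\<^bsub>S\<^esub> z = x \<otimes>\<^bsub>S\<^esub> (y \<otimes>\<^bsub>S\<^esub> z))"

definition is_identity :: "('a, 'b) monoid_scheme \<Rightarrow> 'a \<Rightarrow> bool" where
  "is_identity S e \<longleftrightarrow> e \<in> carrier S \<and>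
     (\<forall>x\<in>carrier S. e \<otimes>\<^bsub>S\<^esub> x = x \<and> x \<otimes>\<^bsub>S\<^esub> e = x)"

(* S^1: S itself if S has an identity, otherwise S with an adjoined identity (None). *)
definition adjoin_one :: "('a, 'b) monoid_scheme \<Rightarrow> 'a option monoid" where
  "adjoin_one S =
     \<lparr> carrier = (if \<exists>e. is_identity S e then Some ` carrier S
                  else insert None (Some ` carrier S)),
       mult = (\<lambda>x y. case x of None \<Rightarrow> y
                  | Some a \<Rightarrow> (case y of None \<Rightarrow> x | Some b \<Rightarrow> Some (a \<otimes>\<^bsub>S\<^esub> b))),
       one = (if \<exists>e. is_identity S e then Some (SOME e. is_identity S e) else None) \<rparr>"

(* Semigroup free product of the family S i (i \<in> I); the components are made disjoint by
   tagging elements with their index. *)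
definition fp_carrier :: "('i \<Rightarrow> ('a, 'b) monoid_scheme) \<Rightarrow> 'i set \<Rightarrow> ('i \<times> 'a) list set" where
  "fp_carrier S I = {xs. xs \<noteq> [] \<and> (\<forall>p\<in>set xs. fst p \<in> I \<and> snd p \<in> carrier (S (fst p))) \<and>
       (\<forall>k. Suc k < length xs \<longrightarrow> fst (xs ! k) \<noteq> fst (xs ! Suc k))}"

definition fp_mult :: "('i \<Rightarrow> ('a, 'b) monoid_scheme) \<Rightarrow> ('i \<times> 'a) list \<Rightarrow> ('i \<times> 'a) list \<Rightarrow> ('i \<times> 'a) list" where
  "fp_mult S xs ys =
     (if xs \<noteq> [] \<and> ys \<noteq> [] \<and> fst (last xs) = fst (hd ys)
      then butlast xs @ [(fst (hd ys), snd (last xs) \<otimes>\<^bsub>S (fst (hd ys))\<^esub> snd (hd ys))] @ tl ys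
      else xs @ ys)"

definition free_product :: "('i \<Rightarrow> ('a, 'b) monoid_scheme) \<Rightarrow> 'i set \<Rightarrow> ('i \<times> 'a) list monoid" where
  "free_product S I = \<lparr> carrier = fp_carrier S I, mult = fp_mult S, one = [] \<rparr>"

definition right_ideal :: "('a, 'b) monoid_scheme \<Rightarrow> 'a set \<Rightarrow> bool" where
  "right_ideal M R \<longleftrightarrow> R \<subseteq> carrier M \<and> (\<forall>r\<in>R. \<forall>s\<in>carrier M. r \<otimes>\<^bsub>M\<^esub> s \<in> R)"

definition fg_right_ideal :: "('a, 'b) monoid_scheme \<Rightarrow> 'a set \<Rightarrow> bool" where
  "fg_right_ideal M R \<longleftrightarrow>
     (\<exists>X. finite X \<and> X \<subseteq> carrier M \<and> R = {x \<otimes>\<^bsub>M\<^esub> s | x s. x \<in> X \<and> s \<in> carrier M})"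

(* Free right M-act on n generators: {0..<n} \<times> M, action (i,m)\<cdot>s = (i, m s). *)
definition free_act :: "('a, 'b) monoid_scheme \<Rightarrow> nat \<Rightarrow> (nat \<times> 'a) set" where
  "free_act M n = {0..<n} \<times> carrier M"

definition right_cong_free :: "('a, 'b) monoid_scheme \<Rightarrow> nat \<Rightarrow> ((nat \<times> 'a) \<times> (nat \<times> 'a)) set \<Rightarrow> bool" where
  "right_cong_free M n \<rho> \<longleftrightarrow> equiv (free_act M n) \<rho> \<and>
     (\<forall>x y s. (x, y) \<in> \<rho> \<longrightarrow> s \<in> carrier M \<longrightarrow>
        ((fst x, snd x \<otimes>\<^bsub>M\<^esub> s), (fst y, snd y \<otimes>\<^bsub>M\<^esub> s)) \<in> \<rho>)"

definition cong_gen_free :: "('a, 'b) monoid_scheme \<Rightarrow> nat \<Rightarrow> ((nat \<times> 'a) \<times> (nat \<times> 'a)) set \<Rightarrow> ((nat \<times> 'a) \<times> (nat \<times> 'a)) set" where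
  "cong_gen_free M n H = \<Inter> {\<rho>. right_cong_free M n \<rho> \<and> H \<subseteq> \<rho>}"

definition fg_right_cong_free :: "('a, 'b) monoid_scheme \<Rightarrow> nat \<Rightarrow> ((nat \<times> 'a) \<times> (nat \<times> 'a)) set \<Rightarrow> bool" where
  "fg_right_cong_free M n \<rho> \<longleftrightarrow>
     (\<exists>H. finite H \<and> H \<subseteq> free_act M n \<times> free_act M n \<and> \<rho> = cong_gen_free M n H)"

(* A right ideal R is finitely presented as a right M-act: R \<cong> F_n / \<rho> with \<rho> finitely
   generated, i.e. there are generators a_0..a_{n-1} of R such that the kernel of the
   canonical surjection F_n \<rightarrow> R, (i,s) \<mapsto> a_i s, is a finitely generated right congruence. *)
definition fp_right_ideal :: "('a, 'b) monoid_scheme \<Rightarrow> 'a set \<Rightarrow> bool" where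
  "fp_right_ideal M R \<longleftrightarrow>
     (\<exists>as. set as \<subseteq> R \<and>
        R = {as ! i \<otimes>\<^bsub>M\<^esub> s | i s. i < length as \<and> s \<in> carrier M} \<and>
        fg_right_cong_free M (length as)
          {(x, y). x \<in> free_act M (length as) \<and> y \<in> free_act M (length as) \<and>
                   as ! fst x \<otimes>\<^bsub>M\<^esub> snd x = as ! fst y \<otimes>\<^bsub>M\<^esub> snd y})"

definition weakly_right_coherent :: "('a, 'b) monoid_scheme \<Rightarrow> bool" where
  "weakly_right_coherent M \<longleftrightarrow>
     (\<forall>R. right_ideal M R \<longrightarrow> fg_right_ideal M R \<longrightarrow> fp_right_ideal M R)"

end

theory Submission
  imports Defs
begin


definition kern :: "('a, 'b) monoid_scheme \<Rightarrow> 'a list \<Rightarrow> ((nat \<times> 'a) \<times> (nat \<times> 'a)) set" where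
  "kern M as = {(x, y). x \<in> free_act M (length as) \<and> y \<in> free_act M (length as) \<and>
                   as ! fst x \<otimes>\<^bsub>M\<^esub> snd x = as ! fst y \<otimes>\<^bsub>M\<^esub> snd y}"

definition gen :: "('a, 'b) monoid_scheme \<Rightarrow> 'a list \<Rightarrow> 'a set" where
  "gen M as = {as ! i \<otimes>\<^bsub>M\<^esub> s | i s. i < length as \<and> s \<in> carrier M}"

definition RE :: "('a, 'b) monoid_scheme \<Rightarrow> bool" where
  "RE M \<longleftrightarrow> (\<forall>a\<in>carrier M. fg_right_cong_free M 1 (kern M [a]))"

definition IH :: "('a, 'b) monoid_scheme \<Rightarrow> bool" where
  "IH M \<longleftrightarrow> (\<forall>a\<in>carrier M. \<forall>b\<in>carrier M. \<exists>X. finite X \<and> X \<subseteq> carrier M \<and>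
      {a \<otimes>\<^bsub>M\<^esub> s | s. s \<in> carrier M} \<inter> {b \<otimes>\<^bsub>M\<^esub> s | s. s \<in> carrier M} =
      {x \<otimes>\<^bsub>M\<^esub> s | x s. x \<in> X \<and> s \<in> carrier M})"

lemma free_act_iff: "x \<in> free_act M n \<longleftrightarrow> fst x < n \<and> snd x \<in> carrier M"
  by (cases x) (auto simp: free_act_def)

lemma full_right_cong:
  assumes "monoid M"
  shows "right_cong_free M n (free_act M n \<times> free_act M n)"
  using assms unfolding right_cong_free_def
  by (auto simp: free_act_iff equiv_def refl_on_def sym_def trans_def monoid.m_closed)

lemma rc_sym: "right_cong_free M n \<rho> \<Longrightarrow> (x, y) \<in> \<rho> \<Longrightarrow> (y, x) \<in> \<rho>"
  unfolding right_cong_free_def equiv_def sym_def by blast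

lemma rc_trans: "right_cong_free M n \<rho> \<Longrightarrow> (x, y) \<in> \<rho> \<Longrightarrow> (y, z) \<in> \<rho> \<Longrightarrow> (x, z) \<in> \<rho>"
  unfolding right_cong_free_def equiv_def trans_def by blast

lemma rc_refl: "right_cong_free M n \<rho> \<Longrightarrow> x \<in> free_act M n \<Longrightarrow> (x, x) \<in> \<rho>"
  unfolding right_cong_free_def equiv_def refl_on_def by blast

lemma rc_sub: "right_cong_free M n \<rho> \<Longrightarrow> (x, y) \<in> \<rho> \<Longrightarrow> x \<in> free_act M n \<and> y \<in> free_act M n"
  unfolding right_cong_free_def equiv_def refl_on_def by blast

lemma rc_mult: "right_cong_free M n \<rho> \<Longrightarrow> ((i, s), (j, t)) \<in> \<rho> \<Longrightarrow> w \<in> carrier M \<Longrightarrow>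
    ((i, s \<otimes>\<^bsub>M\<^esub> w), (j, t \<otimes>\<^bsub>M\<^esub> w)) \<in> \<rho>"
  unfolding right_cong_free_def by (metis fst_conv snd_conv)

lemma cong_gen_rc:
  assumes "monoid M" "H \<subseteq> free_act M n \<times> free_act M n"
  shows "right_cong_free M n (cong_gen_free M n H)"
proof -
  define F where "F = {\<rho>. right_cong_free M n \<rho> \<and> H \<subseteq> \<rho>}"
  have C: "cong_gen_free M n H = \<Inter> F" unfolding F_def cong_gen_free_def by simp
  have ne: "free_act M n \<times> free_act M n \<in> F" using full_right_cong[OF assms(1)] assms(2) F_def by auto
  have a1: "\<Inter> F \<subseteq> free_act M n \<times> free_act M n" using ne by blast
  have a2: "(x, x) \<in> \<Inter> F" if "x \<in> free_act M n" for x
    using that rc_refl unfolding F_def by blast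
  have a3: "(y, x) \<in> \<Inter> F" if "(x, y) \<in> \<Inter> F" for x y
    using that rc_sym unfolding F_def by blast
  have a4: "(x, z) \<in> \<Inter> F" if "(x, y) \<in> \<Inter> F" "(y, z) \<in> \<Inter> F" for x y z
    using that rc_trans unfolding F_def by blast
  have a5: "((fst x, snd x \<otimes>\<^bsub>M\<^esub> s), fst y, snd y \<otimes>\<^bsub>M\<^esub> s) \<in> \<Inter> F"
    if "(x, y) \<in> \<Inter> F" "s \<in> carrier M" for x y s
    using that unfolding F_def right_cong_free_def by blast
  have "equiv (free_act M n) (\<Inter> F)"
    unfolding equiv_def refl_on_def sym_def trans_def
  proof (intro conjI allI impI ballI)
    show "\<Inter> F \<subseteq> free_act M n \<times> free_act M n" by (rule a1)
  next
    fix x assume "x \<in> free_act M n" then show "(x, x) \<in> \<Inter> F" by (rule a2)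
  next
    fix x y assume "(x, y) \<in> \<Inter> F" then show "(y, x) \<in> \<Inter> F" by (rule a3)
  next
    fix x y z assume "(x, y) \<in> \<Inter> F" "(y, z) \<in> \<Inter> F" then show "(x, z) \<in> \<Inter> F" by (rule a4)
  qed
  then show ?thesis unfolding C right_cong_free_def using a5 by blast
qed

lemma cong_gen_least:
  assumes "right_cong_free M n \<rho>" "H \<subseteq> \<rho>"
  shows "cong_gen_free M n H \<subseteq> \<rho>"
  using assms unfolding cong_gen_free_def by blast

lemma cong_gen_incl: "H \<subseteq> cong_gen_free M n H"
  unfolding cong_gen_free_def by blast

lemma kern_rc:
  assumes "monoid M" "set as \<subseteq> carrier M"
  shows "right_cong_free M (length as) (kern M as)"
proof -
  have "as ! a \<otimes>\<^bsub>M\<^esub> (b \<otimes>\<^bsub>M\<^esub> s) = as ! aa \<otimes>\<^bsub>M\<^esub> (ba \<otimes>\<^bsub>M\<^esub> s)"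
    if "a < length as" "b \<in> carrier M" "aa < length as" "ba \<in> carrier M"
       "as ! a \<otimes>\<^bsub>M\<^esub> b = as ! aa \<otimes>\<^bsub>M\<^esub> ba" "s \<in> carrier M" for a b aa ba s
    proof -
    have "as ! a \<in> carrier M" "as ! aa \<in> carrier M" using that(1,3) assms(2) nth_mem by blast+
    then show ?thesis using that assms(1) by (metis monoid.m_assoc)
  qed
  then show ?thesis
  unfolding right_cong_free_def equiv_def refl_on_def sym_def trans_def kern_def
  using assms by (auto simp: free_act_iff monoid.m_closed)
qed

lemma cong_gen_map:
  assumes M: "monoid M"
    and H: "H \<subseteq> free_act M n \<times> free_act M n"
    and r: "right_cong_free M' n' \<rho>'"
    and th: "\<And>x. x \<in> free_act M n \<Longrightarrow> \<theta> x \<in> free_act M' n'"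
    and thmu: "\<And>x s. x \<in> free_act M n \<Longrightarrow> s \<in> carrier M \<Longrightarrow>
        \<theta> (fst x, snd x \<otimes>\<^bsub>M\<^esub> s) = (fst (\<theta> x), snd (\<theta> x) \<otimes>\<^bsub>M'\<^esub> g s) \<and> g s \<in> carrier M'"
    and hh: "\<And>x y. (x, y) \<in> H \<Longrightarrow> (\<theta> x, \<theta> y) \<in> \<rho>'"
    and xy: "(x, y) \<in> cong_gen_free M n H"
  shows "(\<theta> x, \<theta> y) \<in> \<rho>'"
proof -
  let ?P = "{(x, y). x \<in> free_act M n \<and> y \<in> free_act M n \<and> (\<theta> x, \<theta> y) \<in> \<rho>'}"
  have "right_cong_free M n ?P"
    unfolding right_cong_free_def equiv_def refl_on_def sym_def trans_def
  proof (intro conjI allI impI ballI)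
    show "?P \<subseteq> free_act M n \<times> free_act M n" by auto
  next
    fix x assume "x \<in> free_act M n" then show "(x, x) \<in> ?P" using rc_refl[OF r] th by auto
  next
    fix x y assume "(x, y) \<in> ?P" then show "(y, x) \<in> ?P" using rc_sym[OF r] by auto
  next
    fix x y z assume "(x, y) \<in> ?P" "(y, z) \<in> ?P" then show "(x, z) \<in> ?P" using rc_trans[OF r, of "\<theta> x" "\<theta> y" "\<theta> z"] by auto
  next
    fix x y s assume a: "(x, y) \<in> ?P" "s \<in> carrier M"
    then have xa: "x \<in> free_act M n" "y \<in> free_act M n" by auto
    then have c: "(fst x, snd x \<otimes>\<^bsub>M\<^esub> s) \<in> free_act M n" "(fst y, snd y \<otimes>\<^bsub>M\<^esub> s) \<in> free_act M n"
      using a(2) M by (auto simp: free_act_iff monoid.m_closed)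
    have "(\<theta> x, \<theta> y) \<in> \<rho>'" using a by auto
    then have "((fst (\<theta> x), snd (\<theta> x) \<otimes>\<^bsub>M'\<^esub> g s), (fst (\<theta> y), snd (\<theta> y) \<otimes>\<^bsub>M'\<^esub> g s)) \<in> \<rho>'"
      using r thmu[OF xa(1) a(2)] unfolding right_cong_free_def by blast
    then show "((fst x, snd x \<otimes>\<^bsub>M\<^esub> s), fst y, snd y \<otimes>\<^bsub>M\<^esub> s) \<in> ?P"
      using c thmu[OF xa(1) a(2)] thmu[OF xa(2) a(2)] by auto
  qed
  moreover have "H \<subseteq> ?P" using H hh by auto
  ultimately show ?thesis using cong_gen_least xy by blast
qed


lemma fa1_fst: "x \<in> free_act M 1 \<Longrightarrow> fst x = 0"
  by (simp add: free_act_iff)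

lemma embed1:
  assumes M: "monoid M" and i: "i < n" and st: "((0, s), (0, t)) \<in> cong_gen_free M 1 G"
    and G: "G \<subseteq> free_act M 1 \<times> free_act M 1" and r: "right_cong_free M n \<rho>"
    and hG: "\<And>x y. (x, y) \<in> G \<Longrightarrow> ((i, snd x), (i, snd y)) \<in> \<rho>"
  shows "((i, s), (i, t)) \<in> \<rho>"
proof -
  define \<theta> where "\<theta> = (\<lambda>z::nat \<times> 'a. (i, snd z))"
  have "(\<theta> (0, s), \<theta> (0, t)) \<in> \<rho>"
    by (rule cong_gen_map[OF M G r _ _ _ st, where g = id])
       (auto simp: free_act_iff i hG \<theta>_def)
  then show ?thesis by (simp add: \<theta>_def)
qed

lemma choice1: "(\<And>i. i < (n::nat) \<Longrightarrow> \<exists>X. P i X) \<Longrightarrow> \<exists>f. \<forall>i<n. P i (f i)"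
proof -
  assume a: "\<And>i. i < n \<Longrightarrow> \<exists>X. P i X"
  have "\<forall>i. \<exists>X. i < n \<longrightarrow> P i X" using a by blast
  from choice[OF this] show ?thesis by blast
qed

lemma choice2: "(\<And>i j. i < (n::nat) \<Longrightarrow> j < n \<Longrightarrow> \<exists>X. P i j X) \<Longrightarrow> \<exists>f. \<forall>i<n. \<forall>j<n. P i j (f i j)"
proof -
  assume a: "\<And>i j. i < n \<Longrightarrow> j < n \<Longrightarrow> \<exists>X. P i j X"
  have "\<forall>p. \<exists>X. fst p < n \<and> snd p < n \<longrightarrow> P (fst p) (snd p) X" using a by blast
  from choice[OF this] obtain g where g: "\<forall>p. fst p < n \<and> snd p < n \<longrightarrow> P (fst p) (snd p) (g p)" by blast
  show ?thesis by (rule exI[of _ "\<lambda>i j. g (i, j)"]) (use g in auto)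
qed

lemma choice3: "(\<And>i j c. i < (n::nat) \<Longrightarrow> j < n \<Longrightarrow> c \<in> A i j \<Longrightarrow> \<exists>u v. P i j c u v) \<Longrightarrow>
   \<exists>U V. \<forall>i<n. \<forall>j<n. \<forall>c\<in>A i j. P i j c (U i j c) (V i j c)"
proof -
  assume a: "\<And>i j c. i < n \<Longrightarrow> j < n \<Longrightarrow> c \<in> A i j \<Longrightarrow> \<exists>u v. P i j c u v"
  have "\<forall>p. \<exists>uv. fst p < n \<and> fst (snd p) < n \<and> snd (snd p) \<in> A (fst p) (fst (snd p)) \<longrightarrow>
      P (fst p) (fst (snd p)) (snd (snd p)) (fst uv) (snd uv)" using a by fastforce
  from choice[OF this] obtain g where g: "\<forall>p. fst p < n \<and> fst (snd p) < n \<and> snd (snd p) \<in> A (fst p) (fst (snd p)) \<longrightarrow>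
      P (fst p) (fst (snd p)) (snd (snd p)) (fst (g p)) (snd (g p))" by blast
  show ?thesis
    by (rule exI[of _ "\<lambda>i j c. fst (g (i, j, c))"], rule exI[of _ "\<lambda>i j c. snd (g (i, j, c))"]) (use g in auto)
qed

lemma kern_fg_from_RE_IH:
  assumes M: "monoid M" and re: "RE M" and ih: "IH M" and as: "set as \<subseteq> carrier M"
  shows "fg_right_cong_free M (length as) (kern M as)"
proof -
  define n where "n = length as"
  have asc: "as ! i \<in> carrier M" if "i < n" for i using that as n_def nth_mem by blast
  define PH where "PH i H \<longleftrightarrow> finite H \<and> H \<subseteq> free_act M 1 \<times> free_act M 1 \<and> kern M [as ! i] = cong_gen_free M 1 H" for i H
  have "\<exists>H. PH i H" if "i < n" for i
    using re asc that unfolding RE_def fg_right_cong_free_def PH_def by auto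
  then have "\<exists>f. \<forall>i<n. PH i (f i)" by (rule choice1)
  then obtain Hf where "\<forall>i<n. PH i (Hf i)" by blast
  then have Hf: "\<forall>i<n. finite (Hf i) \<and> Hf i \<subseteq> free_act M 1 \<times> free_act M 1 \<and>
      kern M [as ! i] = cong_gen_free M 1 (Hf i)" unfolding PH_def by blast
  define ID where "ID i j = {as ! i \<otimes>\<^bsub>M\<^esub> s | s. s \<in> carrier M} \<inter> {as ! j \<otimes>\<^bsub>M\<^esub> s | s. s \<in> carrier M}" for i j
  define PX where "PX i j X \<longleftrightarrow> finite X \<and> X \<subseteq> carrier M \<and>
      ID i j = {x \<otimes>\<^bsub>M\<^esub> s | x s. x \<in> X \<and> s \<in> carrier M}" for i j X
  have "\<exists>X. PX i j X" if "i < n" "j < n" for i j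
    using ih asc that unfolding IH_def ID_def PX_def by auto
  then have "\<exists>f. \<forall>i<n. \<forall>j<n. PX i j (f i j)" by (rule choice2)
  then obtain Xf where Xf0: "\<forall>i<n. \<forall>j<n. PX i j (Xf i j)" by blast
  then have Xf: "\<forall>i<n. \<forall>j<n. finite (Xf i j) \<and> Xf i j \<subseteq> carrier M \<and>
      ID i j = {x \<otimes>\<^bsub>M\<^esub> s | x s. x \<in> Xf i j \<and> s \<in> carrier M}" unfolding PX_def by blast
  define PU where "PU i j c u v \<longleftrightarrow> u \<in> carrier M \<and> v \<in> carrier M \<and>
      c = as ! i \<otimes>\<^bsub>M\<^esub> u \<and> c = as ! j \<otimes>\<^bsub>M\<^esub> v" for i j c u v
  have "\<exists>u v. PU i j c u v" if ij: "i < n" "j < n" and c: "c \<in> Xf i j" for i j c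
  proof -
    have "c \<in> carrier M" using Xf ij c by auto
    have IDe: "ID i j = {x \<otimes>\<^bsub>M\<^esub> s | x s. x \<in> Xf i j \<and> s \<in> carrier M}" using Xf ij by blast
    have "\<one>\<^bsub>M\<^esub> \<in> carrier M" using M by (rule monoid.one_closed)
    then have "c \<otimes>\<^bsub>M\<^esub> \<one>\<^bsub>M\<^esub> \<in> ID i j" unfolding IDe using c by blast
    then have "c \<in> ID i j" using \<open>c \<in> carrier M\<close> M by (simp add: monoid.r_one)
    then show ?thesis unfolding ID_def PU_def by blast
  qed
  then have "\<exists>U V. \<forall>i<n. \<forall>j<n. \<forall>c\<in>Xf i j. PU i j c (U i j c) (V i j c)" by (rule choice3)
  then obtain U V where "\<forall>i<n. \<forall>j<n. \<forall>c\<in>Xf i j. PU i j c (U i j c) (V i j c)" by blast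
  then have UV: "\<forall>i<n. \<forall>j<n. \<forall>c\<in>Xf i j. U i j c \<in> carrier M \<and> V i j c \<in> carrier M \<and>
      c = as ! i \<otimes>\<^bsub>M\<^esub> U i j c \<and> c = as ! j \<otimes>\<^bsub>M\<^esub> V i j c" unfolding PU_def by blast
  define H where "H = (\<Union>i\<in>{..<n}. (\<lambda>(x, y). ((i, snd x), (i, snd y))) ` Hf i) \<union>
      (\<Union>i\<in>{..<n}. \<Union>j\<in>{..<n}. (\<lambda>c. ((i, U i j c), (j, V i j c))) ` Xf i j)"
  have finH: "finite H" unfolding H_def using Hf Xf by auto
  have Hsub: "H \<subseteq> free_act M n \<times> free_act M n"
  proof
    fix p assume "p \<in> H"
    then show "p \<in> free_act M n \<times> free_act M n"
      unfolding H_def using Hf UV by (fastforce simp: free_act_iff)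
  qed
  define \<rho> where "\<rho> = cong_gen_free M n H"
  have r: "right_cong_free M n \<rho>" unfolding \<rho>_def by (rule cong_gen_rc[OF M Hsub])
  have Hr: "H \<subseteq> \<rho>" unfolding \<rho>_def by (rule cong_gen_incl)
  have kr: "right_cong_free M n (kern M as)" using kern_rc[OF M as] n_def by simp
  have Hk: "H \<subseteq> kern M as"
  proof
    fix p assume p: "p \<in> H"
    show "p \<in> kern M as"
    proof (cases "p \<in> (\<Union>i\<in>{..<n}. (\<lambda>(x, y). ((i, snd x), (i, snd y))) ` Hf i)")
      case True
      then obtain i x y where i: "i < n" and xy: "(x, y) \<in> Hf i" and pe: "p = ((i, snd x), (i, snd y))" by auto
      then have "(x, y) \<in> kern M [as ! i]" using Hf cong_gen_incl by blast
      then show ?thesis unfolding pe kern_def using i n_def by (auto simp: free_act_iff)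
    next
      case False
      then obtain i j c where ij: "i < n" "j < n" and c: "c \<in> Xf i j" and pe: "p = ((i, U i j c), (j, V i j c))"
        using p unfolding H_def by auto
      then show ?thesis using UV unfolding kern_def n_def by (auto simp: free_act_iff)
    qed
  qed
  have "kern M as \<subseteq> \<rho>"
  proof
    fix p assume p: "p \<in> kern M as"
    then obtain i s j t where pe: "p = ((i, s), (j, t))" and ij: "i < n" "j < n" and st: "s \<in> carrier M" "t \<in> carrier M"
      and eq: "as ! i \<otimes>\<^bsub>M\<^esub> s = as ! j \<otimes>\<^bsub>M\<^esub> t"
      unfolding kern_def n_def by (auto simp: free_act_iff)
    have "as ! i \<otimes>\<^bsub>M\<^esub> s \<in> ID i j" unfolding ID_def using st eq by blast
    then obtain c w where c: "c \<in> Xf i j" and w: "w \<in> carrier M" and cw: "as ! i \<otimes>\<^bsub>M\<^esub> s = c \<otimes>\<^bsub>M\<^esub> w"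
      using Xf ij by blast
    have U: "U i j c \<in> carrier M" "c = as ! i \<otimes>\<^bsub>M\<^esub> U i j c" and V: "V i j c \<in> carrier M" "c = as ! j \<otimes>\<^bsub>M\<^esub> V i j c"
      using UV ij c by auto
    have Uw: "U i j c \<otimes>\<^bsub>M\<^esub> w \<in> carrier M" "V i j c \<otimes>\<^bsub>M\<^esub> w \<in> carrier M"
      using U V w M by (auto simp: monoid.m_closed)
    have gH: "((i, snd x), (i, snd y)) \<in> \<rho>" if "(x, y) \<in> Hf i" for x y
      using that ij Hr unfolding H_def by blast
    have gH2: "((j, snd x), (j, snd y)) \<in> \<rho>" if "(x, y) \<in> Hf j" for x y
      using that ij Hr unfolding H_def by blast
    have e1: "as ! i \<otimes>\<^bsub>M\<^esub> (U i j c \<otimes>\<^bsub>M\<^esub> w) = as ! i \<otimes>\<^bsub>M\<^esub> s"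
      using U w cw asc[OF ij(1)] M by (metis monoid.m_assoc)
    have "((0, s), (0, U i j c \<otimes>\<^bsub>M\<^esub> w)) \<in> kern M [as ! i]"
      unfolding kern_def using st Uw e1 by (auto simp: free_act_iff)
    then have "((0, s), (0, U i j c \<otimes>\<^bsub>M\<^esub> w)) \<in> cong_gen_free M 1 (Hf i)" using Hf ij by auto
    then have s1: "((i, s), (i, U i j c \<otimes>\<^bsub>M\<^esub> w)) \<in> \<rho>"
      using embed1[OF M ij(1) _ _ r gH] Hf ij by blast
    have e2: "as ! j \<otimes>\<^bsub>M\<^esub> (V i j c \<otimes>\<^bsub>M\<^esub> w) = as ! j \<otimes>\<^bsub>M\<^esub> t"
      using V w cw eq asc[OF ij(2)] M by (metis monoid.m_assoc)
    have "((0, t), (0, V i j c \<otimes>\<^bsub>M\<^esub> w)) \<in> kern M [as ! j]"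
      unfolding kern_def using st Uw e2 by (auto simp: free_act_iff)
    then have "((0, t), (0, V i j c \<otimes>\<^bsub>M\<^esub> w)) \<in> cong_gen_free M 1 (Hf j)" using Hf ij by auto
    then have s3: "((j, t), (j, V i j c \<otimes>\<^bsub>M\<^esub> w)) \<in> \<rho>"
      using embed1[OF M ij(2) _ _ r gH2] Hf ij by blast
    have "((i, U i j c), (j, V i j c)) \<in> \<rho>" using Hr ij c unfolding H_def by blast
    then have s2: "((i, U i j c \<otimes>\<^bsub>M\<^esub> w), (j, V i j c \<otimes>\<^bsub>M\<^esub> w)) \<in> \<rho>" using rc_mult[OF r] w by blast
    show "p \<in> \<rho>" unfolding pe using rc_trans[OF r s1 rc_trans[OF r s2 rc_sym[OF r s3]]] .
  qed
  moreover have "\<rho> \<subseteq> kern M as" unfolding \<rho>_def using cong_gen_least[OF kr Hk] .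
  ultimately show ?thesis unfolding fg_right_cong_free_def n_def[symmetric] \<rho>_def using finH Hsub by blast
qed

lemma wrc_if_RE_IH:
  assumes M: "monoid M" and re: "RE M" and ih: "IH M"
  shows "weakly_right_coherent M"
  unfolding weakly_right_coherent_def
proof (intro allI impI)
  fix R assume R: "right_ideal M R" "fg_right_ideal M R"
  then obtain X where X: "finite X" "X \<subseteq> carrier M" "R = {x \<otimes>\<^bsub>M\<^esub> s | x s. x \<in> X \<and> s \<in> carrier M}"
    unfolding fg_right_ideal_def by blast
  obtain as where as: "set as = X" using finite_list[OF X(1)] by blast
  have R2: "R = {as ! i \<otimes>\<^bsub>M\<^esub> s | i s. i < length as \<and> s \<in> carrier M}"
    unfolding X(3) as[symmetric] by (auto simp: in_set_conv_nth)
  have "set as \<subseteq> R"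
  proof
    fix x assume "x \<in> set as"
    then have "x \<in> carrier M" "x \<in> X" using as X by auto
    moreover have "\<one>\<^bsub>M\<^esub> \<in> carrier M" using M by (rule monoid.one_closed)
    ultimately have "x \<otimes>\<^bsub>M\<^esub> \<one>\<^bsub>M\<^esub> \<in> R" unfolding X(3) by blast
    then show "x \<in> R" using M \<open>x \<in> carrier M\<close> by (simp add: monoid.r_one)
  qed
  moreover have "fg_right_cong_free M (length as) (kern M as)"
    using kern_fg_from_RE_IH[OF M re ih] as X by auto
  ultimately show "fp_right_ideal M R" unfolding fp_right_ideal_def kern_def using R2 by blast
qed


lemma in_gen: "i < length as \<Longrightarrow> s \<in> carrier M \<Longrightarrow> as ! i \<otimes>\<^bsub>M\<^esub> s \<in> gen M as"
  unfolding gen_def by blast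

lemma genE: "x \<in> gen M as \<Longrightarrow> \<exists>i s. i < length as \<and> s \<in> carrier M \<and> x = as ! i \<otimes>\<^bsub>M\<^esub> s"
  unfolding gen_def by blast

lemma in_gen1: "monoid M \<Longrightarrow> i < length as \<Longrightarrow> as ! i \<in> carrier M \<Longrightarrow> as ! i \<in> gen M as"
  using in_gen[of i as "\<one>\<^bsub>M\<^esub>" M] by (simp add: monoid.one_closed monoid.r_one)

lemma kern_fg_change:
  assumes M: "monoid M" and as: "set as \<subseteq> carrier M" and bs: "set bs \<subseteq> carrier M"
    and g: "gen M as = gen M bs" and fa: "fg_right_cong_free M (length as) (kern M as)"
  shows "fg_right_cong_free M (length bs) (kern M bs)"
proof -
  define na where "na = length as"
  define nb where "nb = length bs"
  have asc: "as ! i \<in> carrier M" if "i < na" for i using that as na_def nth_mem by blast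
  have bsc: "bs ! i \<in> carrier M" if "i < nb" for i using that bs nb_def nth_mem by blast
  define PF where "PF l p \<longleftrightarrow> fst p < na \<and> snd p \<in> carrier M \<and> bs ! l = as ! fst p \<otimes>\<^bsub>M\<^esub> snd p" for l p
  have "\<exists>p. PF l p" if "l < nb" for l
  proof -
    have "bs ! l \<in> gen M as" using g in_gen1[OF M, of l bs] bsc that nb_def by simp
    from genE[OF this] show ?thesis unfolding PF_def na_def by auto
  qed
  then have "\<exists>f. \<forall>l<nb. PF l (f l)" by (rule choice1)
  then obtain fu where fu: "\<forall>l<nb. PF l (fu l)" by blast
  define PG where "PG k p \<longleftrightarrow> fst p < nb \<and> snd p \<in> carrier M \<and> as ! k = bs ! fst p \<otimes>\<^bsub>M\<^esub> snd p" for k p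
  have "\<exists>p. PG k p" if "k < na" for k
  proof -
    have "as ! k \<in> gen M bs" using g[symmetric] in_gen1[OF M, of k as] asc that na_def by simp
    from genE[OF this] show ?thesis unfolding PG_def nb_def by auto
  qed
  then have "\<exists>f. \<forall>k<na. PG k (f k)" by (rule choice1)
  then obtain gv where gv: "\<forall>k<na. PG k (gv k)" by blast
  define f where "f l = fst (fu l)" for l
  define u where "u l = snd (fu l)" for l
  define gg where "gg k = fst (gv k)" for k
  define v where "v k = snd (gv k)" for k
  have F: "f l < na" "u l \<in> carrier M" "bs ! l = as ! f l \<otimes>\<^bsub>M\<^esub> u l" if "l < nb" for l
    using fu that unfolding PF_def f_def u_def by auto
  have G: "gg k < nb" "v k \<in> carrier M" "as ! k = bs ! gg k \<otimes>\<^bsub>M\<^esub> v k" if "k < na" for k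
    using gv that unfolding PG_def gg_def v_def by auto
  obtain Ha where Ha: "finite Ha" "Ha \<subseteq> free_act M na \<times> free_act M na" "kern M as = cong_gen_free M na Ha"
    using fa unfolding fg_right_cong_free_def na_def by blast
  define \<theta> where "\<theta> z = (gg (fst z), v (fst z) \<otimes>\<^bsub>M\<^esub> snd z)" for z :: "nat \<times> 'a"
  define Hb where "Hb = (\<lambda>(x, y). (\<theta> x, \<theta> y)) ` Ha \<union>
      (\<lambda>l. ((l, \<one>\<^bsub>M\<^esub>), (gg (f l), v (f l) \<otimes>\<^bsub>M\<^esub> u l))) ` {..<nb}"
  have thfa: "\<theta> z \<in> free_act M nb" if "z \<in> free_act M na" for z
    using that G M unfolding \<theta>_def by (auto simp: free_act_iff monoid.m_closed)
  have finHb: "finite Hb" unfolding Hb_def using Ha by auto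
  have Hbsub: "Hb \<subseteq> free_act M nb \<times> free_act M nb"
  proof
    fix p assume "p \<in> Hb"
    then show "p \<in> free_act M nb \<times> free_act M nb"
      unfolding Hb_def using Ha(2) thfa F G M
      by (auto simp: free_act_iff monoid.m_closed monoid.one_closed)
  qed
  define \<rho> where "\<rho> = cong_gen_free M nb Hb"
  have r: "right_cong_free M nb \<rho>" unfolding \<rho>_def by (rule cong_gen_rc[OF M Hbsub])
  have Hr: "Hb \<subseteq> \<rho>" unfolding \<rho>_def by (rule cong_gen_incl)
  have kr: "right_cong_free M nb (kern M bs)" using kern_rc[OF M bs] nb_def by simp
  have thk: "bs ! fst (\<theta> z) \<otimes>\<^bsub>M\<^esub> snd (\<theta> z) = as ! fst z \<otimes>\<^bsub>M\<^esub> snd z" if "z \<in> free_act M na" for z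
  proof -
    have "fst z < na" "snd z \<in> carrier M" using that by (auto simp: free_act_iff)
    then show ?thesis unfolding \<theta>_def using G[of "fst z"] M bsc
      by (simp add: monoid.m_assoc)
  qed
  have Hk: "Hb \<subseteq> kern M bs"
  proof
    fix p assume p: "p \<in> Hb"
    show "p \<in> kern M bs"
    proof (cases "p \<in> (\<lambda>(x, y). (\<theta> x, \<theta> y)) ` Ha")
      case True
      then obtain x y where xy: "(x, y) \<in> Ha" and pe: "p = (\<theta> x, \<theta> y)" by auto
      have "(x, y) \<in> kern M as" using xy Ha(3) cong_gen_incl by blast
      then have "x \<in> free_act M na" "y \<in> free_act M na" "as ! fst x \<otimes>\<^bsub>M\<^esub> snd x = as ! fst y \<otimes>\<^bsub>M\<^esub> snd y"
        unfolding kern_def na_def by auto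
      then show ?thesis unfolding pe kern_def nb_def[symmetric] using thfa thk by auto
    next
      case False
      then obtain l where l: "l < nb" and pe: "p = ((l, \<one>\<^bsub>M\<^esub>), (gg (f l), v (f l) \<otimes>\<^bsub>M\<^esub> u l))"
        using p unfolding Hb_def by auto
      have e: "bs ! l \<otimes>\<^bsub>M\<^esub> \<one>\<^bsub>M\<^esub> = bs ! gg (f l) \<otimes>\<^bsub>M\<^esub> (v (f l) \<otimes>\<^bsub>M\<^esub> u l)"
        using F[OF l] G[OF F(1)[OF l]] bsc[OF l] bsc[OF G(1)[OF F(1)[OF l]]] M
        by (simp add: monoid.r_one monoid.m_assoc)
      show ?thesis unfolding pe kern_def nb_def[symmetric] using e l F[OF l] G[OF F(1)[OF l]] M
        by (auto simp: free_act_iff monoid.m_closed monoid.one_closed)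
    qed
  qed
  have step: "((l, s), (gg (f l), v (f l) \<otimes>\<^bsub>M\<^esub> (u l \<otimes>\<^bsub>M\<^esub> s))) \<in> \<rho>"
    if l: "l < nb" and s: "s \<in> carrier M" for l s
  proof -
    have "((l, \<one>\<^bsub>M\<^esub>), (gg (f l), v (f l) \<otimes>\<^bsub>M\<^esub> u l)) \<in> \<rho>" using Hr l unfolding Hb_def by blast
    from rc_mult[OF r this s] show ?thesis
      using M s F[OF l] G[OF F(1)[OF l]] by (simp add: monoid.l_one monoid.m_assoc)
  qed
  have "kern M bs \<subseteq> \<rho>"
  proof
    fix p assume p: "p \<in> kern M bs"
    then obtain l s l' t where pe: "p = ((l, s), (l', t))" and ll: "l < nb" "l' < nb" and st: "s \<in> carrier M" "t \<in> carrier M"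
      and eq: "bs ! l \<otimes>\<^bsub>M\<^esub> s = bs ! l' \<otimes>\<^bsub>M\<^esub> t"
      unfolding kern_def nb_def by (auto simp: free_act_iff)
    have us: "u l \<otimes>\<^bsub>M\<^esub> s \<in> carrier M" "u l' \<otimes>\<^bsub>M\<^esub> t \<in> carrier M" using F ll st M by (auto simp: monoid.m_closed)
    have "as ! f l \<otimes>\<^bsub>M\<^esub> (u l \<otimes>\<^bsub>M\<^esub> s) = as ! f l' \<otimes>\<^bsub>M\<^esub> (u l' \<otimes>\<^bsub>M\<^esub> t)"
      using eq F[OF ll(1)] F[OF ll(2)] asc[OF F(1)[OF ll(1)]] asc[OF F(1)[OF ll(2)]] st M
      by (simp add: monoid.m_assoc)
    then have "((f l, u l \<otimes>\<^bsub>M\<^esub> s), (f l', u l' \<otimes>\<^bsub>M\<^esub> t)) \<in> kern M as"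
      unfolding kern_def na_def[symmetric] using F ll us by (auto simp: free_act_iff)
    then have "((f l, u l \<otimes>\<^bsub>M\<^esub> s), (f l', u l' \<otimes>\<^bsub>M\<^esub> t)) \<in> cong_gen_free M na Ha" using Ha(3) by simp
    moreover have hh: "(\<theta> x, \<theta> y) \<in> \<rho>" if "(x, y) \<in> Ha" for x y using that Hr unfolding Hb_def by blast
    moreover have tm: "\<theta> (fst x, snd x \<otimes>\<^bsub>M\<^esub> s) = (fst (\<theta> x), snd (\<theta> x) \<otimes>\<^bsub>M\<^esub> id s) \<and> id s \<in> carrier M"
      if "x \<in> free_act M na" "s \<in> carrier M" for x s
      using that unfolding \<theta>_def using G M by (auto simp: free_act_iff monoid.m_assoc)
    ultimately have "(\<theta> (f l, u l \<otimes>\<^bsub>M\<^esub> s), \<theta> (f l', u l' \<otimes>\<^bsub>M\<^esub> t)) \<in> \<rho>"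
      using cong_gen_map[OF M Ha(2) r thfa tm hh] by blast
    then have m: "((gg (f l), v (f l) \<otimes>\<^bsub>M\<^esub> (u l \<otimes>\<^bsub>M\<^esub> s)), (gg (f l'), v (f l') \<otimes>\<^bsub>M\<^esub> (u l' \<otimes>\<^bsub>M\<^esub> t))) \<in> \<rho>"
      unfolding \<theta>_def by simp
    show "p \<in> \<rho>" unfolding pe
      using rc_trans[OF r step[OF ll(1) st(1)] rc_trans[OF r m rc_sym[OF r step[OF ll(2) st(2)]]]] .
  qed
  moreover have "\<rho> \<subseteq> kern M bs" unfolding \<rho>_def using cong_gen_least[OF kr Hk] .
  ultimately show ?thesis unfolding fg_right_cong_free_def nb_def[symmetric] \<rho>_def using finHb Hbsub by blast
qed


lemma genE2:
  assumes "x \<in> gen M as"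
  obtains i s where "i < length as" "s \<in> carrier M" "x = as ! i \<otimes>\<^bsub>M\<^esub> s"
  using assms unfolding gen_def by blast

lemma gen_right_ideal:
  assumes M: "monoid M" and as: "set as \<subseteq> carrier M"
  shows "right_ideal M (gen M as)"
  unfolding right_ideal_def
proof (intro conjI ballI)
  show "gen M as \<subseteq> carrier M"
  proof
    fix x assume "x \<in> gen M as"
    then obtain i s where "i < length as" "s \<in> carrier M" "x = as ! i \<otimes>\<^bsub>M\<^esub> s" by (rule genE2)
    moreover have "as ! i \<in> carrier M" using \<open>i < length as\<close> as nth_mem by blast
    ultimately show "x \<in> carrier M" using M by (simp add: monoid.m_closed)
  qed
next
  fix r s assume "r \<in> gen M as" "s \<in> carrier M"
  obtain i t where it: "i < length as" "t \<in> carrier M" "r = as ! i \<otimes>\<^bsub>M\<^esub> t"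
    using \<open>r \<in> gen M as\<close> by (rule genE2)
  have "as ! i \<in> carrier M" using it(1) as nth_mem by blast
  then have "r \<otimes>\<^bsub>M\<^esub> s = as ! i \<otimes>\<^bsub>M\<^esub> (t \<otimes>\<^bsub>M\<^esub> s)" using it M \<open>s \<in> carrier M\<close>
    by (simp add: monoid.m_assoc)
  moreover have "t \<otimes>\<^bsub>M\<^esub> s \<in> carrier M" using it \<open>s \<in> carrier M\<close> M by (simp add: monoid.m_closed)
  ultimately show "r \<otimes>\<^bsub>M\<^esub> s \<in> gen M as" using in_gen[OF it(1)] by simp
qed

lemma gen_fg: "fg_right_ideal M (gen M as)" if "set as \<subseteq> carrier M"
  unfolding fg_right_ideal_def
proof (intro exI conjI)
  show "finite (set as)" by simp
  show "set as \<subseteq> carrier M" by (rule that)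
  show "gen M as = {x \<otimes>\<^bsub>M\<^esub> s | x s. x \<in> set as \<and> s \<in> carrier M}"
  proof (intro equalityI subsetI)
    fix z assume "z \<in> gen M as"
    then obtain i s where "i < length as" "s \<in> carrier M" "z = as ! i \<otimes>\<^bsub>M\<^esub> s" by (rule genE2)
    then show "z \<in> {x \<otimes>\<^bsub>M\<^esub> s | x s. x \<in> set as \<and> s \<in> carrier M}" using nth_mem by blast
  next
    fix z assume "z \<in> {x \<otimes>\<^bsub>M\<^esub> s | x s. x \<in> set as \<and> s \<in> carrier M}"
    then obtain x s where "x \<in> set as" "s \<in> carrier M" "z = x \<otimes>\<^bsub>M\<^esub> s" by blast
    then obtain i where "i < length as" "x = as ! i" by (auto simp: in_set_conv_nth)
    then show "z \<in> gen M as" using in_gen[OF \<open>i < length as\<close> \<open>s \<in> carrier M\<close>] \<open>z = x \<otimes>\<^bsub>M\<^esub> s\<close> by simp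
  qed
qed

lemma wrc_gen_fg:
  assumes M: "monoid M" and w: "weakly_right_coherent M" and as: "set as \<subseteq> carrier M"
  shows "fg_right_cong_free M (length as) (kern M as)"
proof -
  have "fp_right_ideal M (gen M as)"
    using w gen_right_ideal[OF M as] gen_fg[OF as] unfolding weakly_right_coherent_def by blast
  then obtain bs where bs: "set bs \<subseteq> gen M as" "gen M as = gen M bs"
      "fg_right_cong_free M (length bs) (kern M bs)"
    unfolding fp_right_ideal_def gen_def[symmetric] kern_def[symmetric] by blast
  have "set bs \<subseteq> carrier M" using bs(1) gen_right_ideal[OF M as] unfolding right_ideal_def by blast
  then show ?thesis using kern_fg_change[OF M _ as bs(2)[symmetric] bs(3)] by blast
qed

lemma wrc_RE: "monoid M \<Longrightarrow> weakly_right_coherent M \<Longrightarrow> RE M"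
  unfolding RE_def
proof
  fix a assume "monoid M" "weakly_right_coherent M" "a \<in> carrier M"
  then show "fg_right_cong_free M 1 (kern M [a])" using wrc_gen_fg[of M "[a]"] by simp
qed

lemma wrc_IH:
  assumes M: "monoid M" and w: "weakly_right_coherent M"
  shows "IH M"
  unfolding IH_def
proof (intro ballI)
  fix a b assume a: "a \<in> carrier M" and b: "b \<in> carrier M"
  define as where "as = [a, b]"
  have asc: "set as \<subseteq> carrier M" using a b as_def by auto
  have "fg_right_cong_free M 2 (kern M as)" using wrc_gen_fg[OF M w asc] as_def by (simp add: numeral_2_eq_2)
  then obtain H where H: "finite H" "H \<subseteq> free_act M 2 \<times> free_act M 2" "kern M as = cong_gen_free M 2 H"
    unfolding fg_right_cong_free_def by blast
  define \<kappa> where "\<kappa> z = as ! fst z \<otimes>\<^bsub>M\<^esub> snd z" for z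
  have kc: "\<kappa> z \<in> carrier M" if "z \<in> free_act M 2" for z
  proof -
    have "fst z < 2" "snd z \<in> carrier M" using that by (auto simp: free_act_iff)
    moreover have "as ! fst z \<in> carrier M" using \<open>fst z < 2\<close> asc as_def nth_mem by (metis length_Cons list.size(3) numeral_2_eq_2 subsetD)
    ultimately show ?thesis unfolding \<kappa>_def using M by (simp add: monoid.m_closed)
  qed
  define X where "X = (\<lambda>p. \<kappa> (fst p)) ` {p \<in> H. fst (fst p) \<noteq> fst (snd p)}"
  have finX: "finite X" unfolding X_def using H(1) by auto
  have Xc: "X \<subseteq> carrier M" unfolding X_def using H(2) kc by auto
  define J where "J = {x \<otimes>\<^bsub>M\<^esub> s | x s. x \<in> X \<and> s \<in> carrier M}"
  have Hk: "(x, y) \<in> kern M as" if "(x, y) \<in> H" for x y using that H(3) cong_gen_incl by blast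
  have kk: "x \<in> free_act M 2 \<and> y \<in> free_act M 2 \<and> \<kappa> x = \<kappa> y" if "(x, y) \<in> kern M as" for x y
    using that unfolding kern_def \<kappa>_def as_def by (auto simp: numeral_2_eq_2)
  have XJ: "c \<in> J" if "c \<in> X" for c
  proof -
    have "c \<in> carrier M" using that Xc by auto
    moreover have "\<one>\<^bsub>M\<^esub> \<in> carrier M" using M by (rule monoid.one_closed)
    ultimately have "c \<otimes>\<^bsub>M\<^esub> \<one>\<^bsub>M\<^esub> \<in> J" unfolding J_def using that by blast
    then show ?thesis using M \<open>c \<in> carrier M\<close> by (simp add: monoid.r_one)
  qed
  define \<sigma> where "\<sigma> = {(x, y). x \<in> free_act M 2 \<and> y \<in> free_act M 2 \<and> \<kappa> x = \<kappa> y \<and> (fst x = fst y \<or> \<kappa> x \<in> J)}"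
  have Jm: "z \<otimes>\<^bsub>M\<^esub> s \<in> J" if "z \<in> J" "s \<in> carrier M" for z s
  proof -
    obtain c w where "c \<in> X" "w \<in> carrier M" "z = c \<otimes>\<^bsub>M\<^esub> w" using \<open>z \<in> J\<close> unfolding J_def by blast
    moreover then have "z \<otimes>\<^bsub>M\<^esub> s = c \<otimes>\<^bsub>M\<^esub> (w \<otimes>\<^bsub>M\<^esub> s)" "w \<otimes>\<^bsub>M\<^esub> s \<in> carrier M"
      using Xc that(2) M by (auto simp: monoid.m_assoc monoid.m_closed)
    ultimately show ?thesis unfolding J_def by blast
  qed
  have km: "\<kappa> (fst x, snd x \<otimes>\<^bsub>M\<^esub> s) = \<kappa> x \<otimes>\<^bsub>M\<^esub> s" if "x \<in> free_act M 2" "s \<in> carrier M" for x s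
  proof -
    have "fst x < 2" "snd x \<in> carrier M" using that by (auto simp: free_act_iff)
    moreover have "as ! fst x \<in> carrier M" using \<open>fst x < 2\<close> asc as_def nth_mem by (metis length_Cons list.size(3) numeral_2_eq_2 subsetD)
    ultimately show ?thesis unfolding \<kappa>_def using M that(2) by (simp add: monoid.m_assoc)
  qed
  have rs: "right_cong_free M 2 \<sigma>"
    unfolding right_cong_free_def equiv_def refl_on_def sym_def trans_def
  proof (intro conjI allI impI ballI)
    show "\<sigma> \<subseteq> free_act M 2 \<times> free_act M 2" unfolding \<sigma>_def by auto
  next
    fix x assume "x \<in> free_act M 2" then show "(x, x) \<in> \<sigma>" unfolding \<sigma>_def by auto
  next
    fix x y assume "(x, y) \<in> \<sigma>" then show "(y, x) \<in> \<sigma>" unfolding \<sigma>_def by auto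
  next
    fix x y z assume "(x, y) \<in> \<sigma>" "(y, z) \<in> \<sigma>" then show "(x, z) \<in> \<sigma>" unfolding \<sigma>_def by auto
  next
    fix x y s assume xy: "(x, y) \<in> \<sigma>" and s: "s \<in> carrier M"
    then have x: "x \<in> free_act M 2" "y \<in> free_act M 2" "\<kappa> x = \<kappa> y" "fst x = fst y \<or> \<kappa> x \<in> J"
      unfolding \<sigma>_def by auto
    have "(fst x, snd x \<otimes>\<^bsub>M\<^esub> s) \<in> free_act M 2" "(fst y, snd y \<otimes>\<^bsub>M\<^esub> s) \<in> free_act M 2"
      using x s M by (auto simp: free_act_iff monoid.m_closed)
    then show "((fst x, snd x \<otimes>\<^bsub>M\<^esub> s), fst y, snd y \<otimes>\<^bsub>M\<^esub> s) \<in> \<sigma>"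
      unfolding \<sigma>_def using km[OF x(1) s] km[OF x(2) s] x Jm s by auto
  qed
  have "H \<subseteq> \<sigma>"
  proof
    fix p assume p: "p \<in> H"
    obtain x y where pe: "p = (x, y)" by (cases p)
    have "(x, y) \<in> kern M as" using Hk p pe by simp
    then have k: "x \<in> free_act M 2" "y \<in> free_act M 2" "\<kappa> x = \<kappa> y" using kk by blast+
    have "fst x \<noteq> fst y \<Longrightarrow> \<kappa> x \<in> X" unfolding X_def using p pe by force
    then show "p \<in> \<sigma>" unfolding pe \<sigma>_def using k XJ by auto
  qed
  then have ks: "kern M as \<subseteq> \<sigma>" using cong_gen_least[OF rs] H(3) by simp
  show "\<exists>X. finite X \<and> X \<subseteq> carrier M \<and>
      {a \<otimes>\<^bsub>M\<^esub> s | s. s \<in> carrier M} \<inter> {b \<otimes>\<^bsub>M\<^esub> s | s. s \<in> carrier M} =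
      {x \<otimes>\<^bsub>M\<^esub> s | x s. x \<in> X \<and> s \<in> carrier M}"
  proof (intro exI conjI)
    show "finite X" "X \<subseteq> carrier M" by (fact finX, fact Xc)
    show "{a \<otimes>\<^bsub>M\<^esub> s | s. s \<in> carrier M} \<inter> {b \<otimes>\<^bsub>M\<^esub> s | s. s \<in> carrier M} = {x \<otimes>\<^bsub>M\<^esub> s | x s. x \<in> X \<and> s \<in> carrier M}"
    proof (intro equalityI subsetI)
      fix z assume "z \<in> {a \<otimes>\<^bsub>M\<^esub> s | s. s \<in> carrier M} \<inter> {b \<otimes>\<^bsub>M\<^esub> s | s. s \<in> carrier M}"
      then obtain s t where st: "s \<in> carrier M" "t \<in> carrier M" "z = a \<otimes>\<^bsub>M\<^esub> s" "z = b \<otimes>\<^bsub>M\<^esub> t" by blast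
      have "((0, s), (1, t)) \<in> kern M as" unfolding kern_def as_def using st by (auto simp: free_act_iff numeral_2_eq_2)
      then have "((0, s), (1, t)) \<in> \<sigma>" using ks by blast
      then have "\<kappa> (0, s) \<in> J" unfolding \<sigma>_def by auto
      then show "z \<in> {x \<otimes>\<^bsub>M\<^esub> s | x s. x \<in> X \<and> s \<in> carrier M}" using st unfolding \<kappa>_def as_def J_def by simp
    next
      fix z assume "z \<in> {x \<otimes>\<^bsub>M\<^esub> s | x s. x \<in> X \<and> s \<in> carrier M}"
      then obtain c w where cw: "c \<in> X" "w \<in> carrier M" "z = c \<otimes>\<^bsub>M\<^esub> w" by blast
      then obtain x y where xy: "(x, y) \<in> H" "fst x \<noteq> fst y" "c = \<kappa> x" unfolding X_def by auto
      then have "(x, y) \<in> kern M as" using Hk by simp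
      then have k: "x \<in> free_act M 2" "y \<in> free_act M 2" "\<kappa> x = \<kappa> y" using kk by blast+
      have "\<exists>s t. s \<in> carrier M \<and> t \<in> carrier M \<and> c = a \<otimes>\<^bsub>M\<^esub> s \<and> c = b \<otimes>\<^bsub>M\<^esub> t"
      proof (cases "fst x = 0")
        case True
        then have "fst y = 1" using k(2) xy(2) by (auto simp: free_act_iff)
        then have e: "c = a \<otimes>\<^bsub>M\<^esub> snd x" "c = b \<otimes>\<^bsub>M\<^esub> snd y"
          using True k xy(3) unfolding \<kappa>_def as_def by auto
        show ?thesis
        proof (intro exI conjI)
          show "snd x \<in> carrier M" "snd y \<in> carrier M" using k by (auto simp: free_act_iff)
        qed (fact e(1), fact e(2))
      next
        case False
        then have "fst x = 1" "fst y = 0" using k xy(2) by (auto simp: free_act_iff)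
        then have e: "c = b \<otimes>\<^bsub>M\<^esub> snd x" "c = a \<otimes>\<^bsub>M\<^esub> snd y"
          using k xy(3) unfolding \<kappa>_def as_def by auto
        show ?thesis
        proof (intro exI conjI)
          show "snd y \<in> carrier M" "snd x \<in> carrier M" using k by (auto simp: free_act_iff)
        qed (fact e(2), fact e(1))
      qed
      then obtain s t where st: "s \<in> carrier M" "t \<in> carrier M" "c = a \<otimes>\<^bsub>M\<^esub> s" "c = b \<otimes>\<^bsub>M\<^esub> t" by blast
      have "z = a \<otimes>\<^bsub>M\<^esub> (s \<otimes>\<^bsub>M\<^esub> w)"
        using st(1,3) cw(2,3) a M by (simp add: monoid.m_assoc)
      moreover have "z = b \<otimes>\<^bsub>M\<^esub> (t \<otimes>\<^bsub>M\<^esub> w)"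
        using st(2,4) cw(2,3) b M by (simp add: monoid.m_assoc)
      moreover have "s \<otimes>\<^bsub>M\<^esub> w \<in> carrier M" "t \<otimes>\<^bsub>M\<^esub> w \<in> carrier M" using st cw M by (auto simp: monoid.m_closed)
      ultimately show "z \<in> {a \<otimes>\<^bsub>M\<^esub> s | s. s \<in> carrier M} \<inter> {b \<otimes>\<^bsub>M\<^esub> s | s. s \<in> carrier M}" by blast
    qed
  qed
qed

lemma wrc_iff_RE_IH: "monoid M \<Longrightarrow> weakly_right_coherent M \<longleftrightarrow> RE M \<and> IH M"
  using wrc_RE wrc_IH wrc_if_RE_IH by blast


locale retr =
  fixes M :: "('a, 'b) monoid_scheme" and N :: "('c, 'd) monoid_scheme" and \<phi> \<pi>
  assumes M: "monoid M" and N: "monoid N"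
    and phi: "\<And>a. a \<in> carrier N \<Longrightarrow> \<phi> a \<in> carrier M"
    and phim: "\<And>a b. a \<in> carrier N \<Longrightarrow> b \<in> carrier N \<Longrightarrow> \<phi> (a \<otimes>\<^bsub>N\<^esub> b) = \<phi> a \<otimes>\<^bsub>M\<^esub> \<phi> b"
    and pi: "\<And>a. a \<in> carrier M \<Longrightarrow> \<pi> a \<in> carrier N"
    and pim: "\<And>a b. a \<in> carrier M \<Longrightarrow> b \<in> carrier M \<Longrightarrow> \<pi> (a \<otimes>\<^bsub>M\<^esub> b) = \<pi> a \<otimes>\<^bsub>N\<^esub> \<pi> b"
    and pp: "\<And>a. a \<in> carrier N \<Longrightarrow> \<pi> (\<phi> a) = a"
begin

lemma RE_transfer:
  assumes re: "RE M"
  shows "RE N"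
  unfolding RE_def
proof
  fix a assume a: "a \<in> carrier N"
  obtain HM where HM: "finite HM" "HM \<subseteq> free_act M 1 \<times> free_act M 1" "kern M [\<phi> a] = cong_gen_free M 1 HM"
    using re phi[OF a] unfolding RE_def fg_right_cong_free_def by blast
  define \<theta> where "\<theta> z = (fst z, \<pi> (snd z))" for z :: "nat \<times> 'a"
  define H' where "H' = (\<lambda>(x, y). (\<theta> x, \<theta> y)) ` HM"
  have thfa: "\<theta> z \<in> free_act N 1" if "z \<in> free_act M 1" for z
    using that pi unfolding \<theta>_def by (auto simp: free_act_iff)
  have finH: "finite H'" unfolding H'_def using HM by auto
  have Hsub: "H' \<subseteq> free_act N 1 \<times> free_act N 1" unfolding H'_def using HM(2) thfa by auto
  define \<rho> where "\<rho> = cong_gen_free N 1 H'"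
  have r: "right_cong_free N 1 \<rho>" unfolding \<rho>_def by (rule cong_gen_rc[OF N Hsub])
  have Hr: "H' \<subseteq> \<rho>" unfolding \<rho>_def by (rule cong_gen_incl)
  have kr: "right_cong_free N 1 (kern N [a])" using kern_rc[OF N, of "[a]"] a by simp
  have Hk: "H' \<subseteq> kern N [a]"
  proof
    fix p assume "p \<in> H'"
    then obtain x y where xy: "(x, y) \<in> HM" and pe: "p = (\<theta> x, \<theta> y)" unfolding H'_def by auto
    have "(x, y) \<in> kern M [\<phi> a]" using xy HM(3) cong_gen_incl by blast
    then have k: "x \<in> free_act M 1" "y \<in> free_act M 1" "\<phi> a \<otimes>\<^bsub>M\<^esub> snd x = \<phi> a \<otimes>\<^bsub>M\<^esub> snd y"
      unfolding kern_def by (auto simp: free_act_iff)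
    have sx: "snd x \<in> carrier M" "snd y \<in> carrier M" using k by (auto simp: free_act_iff)
    have "\<pi> (\<phi> a \<otimes>\<^bsub>M\<^esub> snd x) = a \<otimes>\<^bsub>N\<^esub> \<pi> (snd x)" "\<pi> (\<phi> a \<otimes>\<^bsub>M\<^esub> snd y) = a \<otimes>\<^bsub>N\<^esub> \<pi> (snd y)"
      using pim[OF phi[OF a] sx(1)] pim[OF phi[OF a] sx(2)] pp[OF a] by simp_all
    then have "a \<otimes>\<^bsub>N\<^esub> \<pi> (snd x) = a \<otimes>\<^bsub>N\<^esub> \<pi> (snd y)" using k(3) by simp
    then show "p \<in> kern N [a]" unfolding pe kern_def using thfa k by (auto simp: \<theta>_def free_act_iff)
  qed
  have "kern N [a] \<subseteq> \<rho>"
  proof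
    fix p assume "p \<in> kern N [a]"
    then obtain s t where pe: "p = ((0, s), (0, t))" and st: "s \<in> carrier N" "t \<in> carrier N"
      and eq: "a \<otimes>\<^bsub>N\<^esub> s = a \<otimes>\<^bsub>N\<^esub> t" unfolding kern_def by (auto simp: free_act_iff)
    have "\<phi> a \<otimes>\<^bsub>M\<^esub> \<phi> s = \<phi> a \<otimes>\<^bsub>M\<^esub> \<phi> t" using eq phim[OF a st(1)] phim[OF a st(2)] by simp
    then have "((0, \<phi> s), (0, \<phi> t)) \<in> kern M [\<phi> a]" unfolding kern_def using st phi by (auto simp: free_act_iff)
    then have c: "((0, \<phi> s), (0, \<phi> t)) \<in> cong_gen_free M 1 HM" using HM(3) by simp
    have hh: "(\<theta> x, \<theta> y) \<in> \<rho>" if "(x, y) \<in> HM" for x y using that Hr unfolding H'_def by blast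
    have tm: "\<theta> (fst x, snd x \<otimes>\<^bsub>M\<^esub> s) = (fst (\<theta> x), snd (\<theta> x) \<otimes>\<^bsub>N\<^esub> \<pi> s) \<and> \<pi> s \<in> carrier N"
      if "x \<in> free_act M 1" "s \<in> carrier M" for x s
      using that pim pi unfolding \<theta>_def by (auto simp: free_act_iff)
    have "(\<theta> (0, \<phi> s), \<theta> (0, \<phi> t)) \<in> \<rho>" using cong_gen_map[OF M HM(2) r thfa tm hh c] .
    then show "p \<in> \<rho>" unfolding pe \<theta>_def using pp st by simp
  qed
  moreover have "\<rho> \<subseteq> kern N [a]" unfolding \<rho>_def using cong_gen_least[OF kr Hk] .
  ultimately show "fg_right_cong_free N 1 (kern N [a])"
    unfolding fg_right_cong_free_def using finH Hsub \<rho>_def by auto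
qed

lemma IH_transfer:
  assumes ih: "IH M"
  shows "IH N"
  unfolding IH_def
proof (intro ballI)
  fix a b assume a: "a \<in> carrier N" and b: "b \<in> carrier N"
  obtain X where X: "finite X" "X \<subseteq> carrier M"
    "{\<phi> a \<otimes>\<^bsub>M\<^esub> s | s. s \<in> carrier M} \<inter> {\<phi> b \<otimes>\<^bsub>M\<^esub> s | s. s \<in> carrier M} =
      {x \<otimes>\<^bsub>M\<^esub> s | x s. x \<in> X \<and> s \<in> carrier M}"
    using ih[unfolded IH_def, rule_format, OF phi[OF a] phi[OF b]] by (elim exE conjE) assumption
  show "\<exists>X. finite X \<and> X \<subseteq> carrier N \<and>
      {a \<otimes>\<^bsub>N\<^esub> s | s. s \<in> carrier N} \<inter> {b \<otimes>\<^bsub>N\<^esub> s | s. s \<in> carrier N} =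
      {x \<otimes>\<^bsub>N\<^esub> s | x s. x \<in> X \<and> s \<in> carrier N}"
  proof (intro exI conjI)
    show "finite (\<pi> ` X)" using X by auto
    show "\<pi> ` X \<subseteq> carrier N" using X pi by auto
    show "{a \<otimes>\<^bsub>N\<^esub> s | s. s \<in> carrier N} \<inter> {b \<otimes>\<^bsub>N\<^esub> s | s. s \<in> carrier N} =
      {x \<otimes>\<^bsub>N\<^esub> s | x s. x \<in> \<pi> ` X \<and> s \<in> carrier N}"
    proof (intro equalityI subsetI)
      fix z assume "z \<in> {a \<otimes>\<^bsub>N\<^esub> s | s. s \<in> carrier N} \<inter> {b \<otimes>\<^bsub>N\<^esub> s | s. s \<in> carrier N}"
      then obtain s t where st: "s \<in> carrier N" "t \<in> carrier N" "z = a \<otimes>\<^bsub>N\<^esub> s" "z = b \<otimes>\<^bsub>N\<^esub> t" by blast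
      have zc: "z \<in> carrier N" using st a N by (simp add: monoid.m_closed)
      have "\<phi> z = \<phi> a \<otimes>\<^bsub>M\<^esub> \<phi> s" using phim[OF a st(1)] st(3) by simp
      moreover have "\<phi> z = \<phi> b \<otimes>\<^bsub>M\<^esub> \<phi> t" using phim[OF b st(2)] st(4) by simp
      ultimately have "\<phi> z \<in> {\<phi> a \<otimes>\<^bsub>M\<^esub> s | s. s \<in> carrier M} \<inter> {\<phi> b \<otimes>\<^bsub>M\<^esub> s | s. s \<in> carrier M}"
        using phi[OF st(1)] phi[OF st(2)] by blast
      then have "\<phi> z \<in> {x \<otimes>\<^bsub>M\<^esub> s | x s. x \<in> X \<and> s \<in> carrier M}" using X(3) by simp
      then obtain c w where cw: "c \<in> X" "w \<in> carrier M" "\<phi> z = c \<otimes>\<^bsub>M\<^esub> w" by blast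
      have "z = \<pi> c \<otimes>\<^bsub>N\<^esub> \<pi> w" using pp[OF zc] cw pim X(2) by (metis subsetD)
      moreover have "\<pi> c \<in> \<pi> ` X" "\<pi> w \<in> carrier N" using cw pi by auto
      ultimately show "z \<in> {x \<otimes>\<^bsub>N\<^esub> s | x s. x \<in> \<pi> ` X \<and> s \<in> carrier N}" by blast
    next
      fix z assume "z \<in> {x \<otimes>\<^bsub>N\<^esub> s | x s. x \<in> \<pi> ` X \<and> s \<in> carrier N}"
      then obtain c w where cw: "c \<in> X" "w \<in> carrier N" "z = \<pi> c \<otimes>\<^bsub>N\<^esub> w" by blast
      have cc: "c \<in> carrier M" using cw X by auto
      have "\<one>\<^bsub>M\<^esub> \<in> carrier M" using M by (rule monoid.one_closed)
      then have "c \<otimes>\<^bsub>M\<^esub> \<one>\<^bsub>M\<^esub> \<in> {x \<otimes>\<^bsub>M\<^esub> s | x s. x \<in> X \<and> s \<in> carrier M}" using cw by blast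
      then have "c \<in> {x \<otimes>\<^bsub>M\<^esub> s | x s. x \<in> X \<and> s \<in> carrier M}" using cc M by (simp add: monoid.r_one)
      then have "c \<in> {\<phi> a \<otimes>\<^bsub>M\<^esub> s | s. s \<in> carrier M} \<inter> {\<phi> b \<otimes>\<^bsub>M\<^esub> s | s. s \<in> carrier M}" using X(3) by simp
      then obtain p q where pq: "p \<in> carrier M" "q \<in> carrier M" "c = \<phi> a \<otimes>\<^bsub>M\<^esub> p" "c = \<phi> b \<otimes>\<^bsub>M\<^esub> q" by blast
      have "\<pi> c = a \<otimes>\<^bsub>N\<^esub> \<pi> p" using pq(1,3) pim phi pp a by simp
      then have "z = a \<otimes>\<^bsub>N\<^esub> (\<pi> p \<otimes>\<^bsub>N\<^esub> w)" using cw pi pq a N by (simp add: monoid.m_assoc)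
      moreover have "\<pi> c = b \<otimes>\<^bsub>N\<^esub> \<pi> q" using pq(2,4) pim phi pp b by simp
      then have "z = b \<otimes>\<^bsub>N\<^esub> (\<pi> q \<otimes>\<^bsub>N\<^esub> w)" using cw pi pq b N by (simp add: monoid.m_assoc)
      moreover have "\<pi> p \<otimes>\<^bsub>N\<^esub> w \<in> carrier N" "\<pi> q \<otimes>\<^bsub>N\<^esub> w \<in> carrier N" using pi pq cw N by (auto simp: monoid.m_closed)
      ultimately show "z \<in> {a \<otimes>\<^bsub>N\<^esub> s | s. s \<in> carrier N} \<inter> {b \<otimes>\<^bsub>N\<^esub> s | s. s \<in> carrier N}" by blast
    qed
  qed
qed

lemma wrc_transfer: "weakly_right_coherent M \<Longrightarrow> weakly_right_coherent N"
  using wrc_iff_RE_IH[OF M] wrc_iff_RE_IH[OF N] RE_transfer IH_transfer by blast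

end


lemma ao_mult: "x \<otimes>\<^bsub>adjoin_one S\<^esub> y = (case x of None \<Rightarrow> y | Some a \<Rightarrow> (case y of None \<Rightarrow> x | Some b \<Rightarrow> Some (a \<otimes>\<^bsub>S\<^esub> b)))"
  by (simp add: adjoin_one_def)

lemma ao_mult_simps[simp]:
  "None \<otimes>\<^bsub>adjoin_one S\<^esub> y = y"
  "x \<otimes>\<^bsub>adjoin_one S\<^esub> None = x"
  "Some a \<otimes>\<^bsub>adjoin_one S\<^esub> Some b = Some (a \<otimes>\<^bsub>S\<^esub> b)"
  by (auto simp: ao_mult split: option.splits)

lemma identity_unique: "is_identity S e \<Longrightarrow> is_identity S e' \<Longrightarrow> e = e'"
  unfolding is_identity_def by metis

lemma ao_carrier_id: "is_identity S e \<Longrightarrow> carrier (adjoin_one S) = Some ` carrier S"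
  unfolding adjoin_one_def by auto

lemma ao_carrier_noid: "\<not> (\<exists>e. is_identity S e) \<Longrightarrow> carrier (adjoin_one S) = insert None (Some ` carrier S)"
  unfolding adjoin_one_def by auto

lemma ao_one_id: "is_identity S e \<Longrightarrow> one (adjoin_one S) = Some e"
proof -
  assume e: "is_identity S e"
  have "(SOME e. is_identity S e) = e" using e identity_unique[OF _ e] by (rule some_equality)
  then show ?thesis unfolding adjoin_one_def using e by auto
qed

lemma ao_one_noid: "\<not> (\<exists>e. is_identity S e) \<Longrightarrow> one (adjoin_one S) = None"
  unfolding adjoin_one_def by auto

lemma ao_carrier_sub: "carrier (adjoin_one S) \<subseteq> insert None (Some ` carrier S)"
  unfolding adjoin_one_def by auto

lemma ao_Some_in: "a \<in> carrier S \<Longrightarrow> Some a \<in> carrier (adjoin_one S)"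
  unfolding adjoin_one_def by auto

lemma ao_Some_iff: "Some a \<in> carrier (adjoin_one S) \<longleftrightarrow> a \<in> carrier S"
  unfolding adjoin_one_def by auto

lemma ao_None_iff: "None \<in> carrier (adjoin_one S) \<longleftrightarrow> \<not> (\<exists>e. is_identity S e)"
  unfolding adjoin_one_def by auto

definition V :: "('a, 'b) monoid_scheme \<Rightarrow> 'a option set" where
  "V S = insert None (Some ` carrier S)"

lemma V_closed:
  assumes "is_semigroup S" "x \<in> V S" "y \<in> V S"
  shows "x \<otimes>\<^bsub>adjoin_one S\<^esub> y \<in> V S"
  using assms unfolding V_def is_semigroup_def by (auto simp: ao_mult split: option.splits)

lemma V_assoc:
  assumes "is_semigroup S" "x \<in> V S" "y \<in> V S" "z \<in> V S"
  shows "(x \<otimes>\<^bsub>adjoin_one S\<^esub> y) \<otimes>\<^bsub>adjoin_one S\<^esub> z = x \<otimes>\<^bsub>adjoin_one S\<^esub> (y \<otimes>\<^bsub>adjoin_one S\<^esub> z)"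
  using assms unfolding V_def is_semigroup_def by (auto simp: ao_mult split: option.splits)

lemma carrier_V: "carrier (adjoin_one S) \<subseteq> V S"
  using ao_carrier_sub unfolding V_def .

lemma one_V: "one (adjoin_one S) \<in> V S"
proof (cases "\<exists>e. is_identity S e")
  case True
  then obtain e where e: "is_identity S e" by blast
  then show ?thesis using ao_one_id[OF e] unfolding is_identity_def V_def by auto
next
  case False
  then show ?thesis using ao_one_noid[OF False] unfolding V_def by simp
qed

lemma one_carrier: "one (adjoin_one S) \<in> carrier (adjoin_one S)"
proof (cases "\<exists>e. is_identity S e")
  case True
  then obtain e where e: "is_identity S e" by blast
  then show ?thesis using ao_one_id[OF e] ao_carrier_id[OF e] unfolding is_identity_def by auto
next
  case False
  then show ?thesis using ao_one_noid[OF False] ao_carrier_noid[OF False] by simp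
qed

lemma one_left_V: "x \<in> carrier (adjoin_one S) \<Longrightarrow> one (adjoin_one S) \<otimes>\<^bsub>adjoin_one S\<^esub> x = x"
proof (cases "\<exists>e. is_identity S e")
  case True
  then obtain e where e: "is_identity S e" by blast
  assume "x \<in> carrier (adjoin_one S)"
  then show ?thesis using ao_one_id[OF e] e using ao_carrier_id[OF e] unfolding is_identity_def by auto
next
  case False
  then show ?thesis using ao_one_noid[OF False] by simp
qed

lemma one_right_V: "x \<in> carrier (adjoin_one S) \<Longrightarrow> x \<otimes>\<^bsub>adjoin_one S\<^esub> one (adjoin_one S) = x"
proof (cases "\<exists>e. is_identity S e")
  case True
  then obtain e where e: "is_identity S e" by blast
  assume "x \<in> carrier (adjoin_one S)"
  then show ?thesis using ao_one_id[OF e] e using ao_carrier_id[OF e] unfolding is_identity_def by auto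
next
  case False
  then show ?thesis using ao_one_noid[OF False] by simp
qed

lemma ao_closed:
  assumes S: "is_semigroup S" and x: "x \<in> carrier (adjoin_one S)" and y: "y \<in> carrier (adjoin_one S)"
  shows "x \<otimes>\<^bsub>adjoin_one S\<^esub> y \<in> carrier (adjoin_one S)"
proof (cases x)
  case None then show ?thesis using y by simp
next
  case (Some a)
  show ?thesis
  proof (cases y)
    case None then show ?thesis using x by simp
  next
    case (Some b)
    have "a \<in> carrier S" using x \<open>x = Some a\<close> ao_Some_iff[THEN iffD1] by metis
    have "b \<in> carrier S" using y Some ao_Some_iff[THEN iffD1] by metis
    with \<open>a \<in> carrier S\<close> have "a \<otimes>\<^bsub>S\<^esub> b \<in> carrier S" using S unfolding is_semigroup_def by blast
    then show ?thesis using \<open>x = Some a\<close> Some by (simp add: ao_Some_in)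
  qed
qed

lemma ao_monoid:
  assumes S: "is_semigroup S"
  shows "monoid (adjoin_one S)"
proof (rule monoidI)
  fix x y assume "x \<in> carrier (adjoin_one S)" "y \<in> carrier (adjoin_one S)"
  then show "x \<otimes>\<^bsub>adjoin_one S\<^esub> y \<in> carrier (adjoin_one S)" by (rule ao_closed[OF S])
next
  show "\<one>\<^bsub>adjoin_one S\<^esub> \<in> carrier (adjoin_one S)" by (rule one_carrier)
next
  fix x y z assume "x \<in> carrier (adjoin_one S)" "y \<in> carrier (adjoin_one S)" "z \<in> carrier (adjoin_one S)"
  then show "x \<otimes>\<^bsub>adjoin_one S\<^esub> y \<otimes>\<^bsub>adjoin_one S\<^esub> z = x \<otimes>\<^bsub>adjoin_one S\<^esub> (y \<otimes>\<^bsub>adjoin_one S\<^esub> z)"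
    using V_assoc[OF S] carrier_V by blast
next
  fix x assume "x \<in> carrier (adjoin_one S)"
  then show "\<one>\<^bsub>adjoin_one S\<^esub> \<otimes>\<^bsub>adjoin_one S\<^esub> x = x" using one_left_V by blast
next
  fix x assume "x \<in> carrier (adjoin_one S)"
  then show "x \<otimes>\<^bsub>adjoin_one S\<^esub> \<one>\<^bsub>adjoin_one S\<^esub> = x" using one_right_V by blast
qed

section \<open>Free product basics\<close>

definition okw :: "('i \<Rightarrow> ('a, 'b) monoid_scheme) \<Rightarrow> 'i set \<Rightarrow> ('i \<times> 'a) list \<Rightarrow> bool" where
  "okw S I xs \<longleftrightarrow> (\<forall>p\<in>set xs. fst p \<in> I \<and> snd p \<in> carrier (S (fst p))) \<and>
      successively (\<lambda>p q. fst p \<noteq> fst q) xs"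

lemma fp_carrier_okw: "xs \<in> fp_carrier S I \<longleftrightarrow> xs \<noteq> [] \<and> okw S I xs"
  unfolding fp_carrier_def okw_def successively_conv_nth by auto

lemma fp_mult_Nil[simp]: "fp_mult S [] ys = ys" "fp_mult S xs [] = xs"
  by (auto simp: fp_mult_def)

lemma fp_mult_merge: "fp_mult S (a @ [(i, x)]) ((i, y) # c) = a @ (i, x \<otimes>\<^bsub>S i\<^esub> y) # c"
  by (simp add: fp_mult_def)

lemma fp_mult_cat: "j \<noteq> i \<Longrightarrow> fp_mult S (a @ [(i, x)]) ((j, y) # c) = a @ (i, x) # (j, y) # c"
  by (simp add: fp_mult_def)

lemma fp_mult_gen:
  "fp_mult S (a @ [(i, x)]) ((j, y) # c) =
     (if i = j then a @ (i, x \<otimes>\<^bsub>S i\<^esub> y) # c else a @ (i, x) # (j, y) # c)"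
  by (simp add: fp_mult_def)

definition letok :: "('i \<Rightarrow> ('a, 'b) monoid_scheme) \<Rightarrow> 'i set \<Rightarrow> ('i \<times> 'a) list \<Rightarrow> bool" where
  "letok S I xs \<longleftrightarrow> (\<forall>p\<in>set xs. fst p \<in> I \<and> snd p \<in> carrier (S (fst p)))"

lemma fp_assoc:
  assumes S: "\<forall>i\<in>I. is_semigroup (S i)"
    and xs: "letok S I xs" and ys: "letok S I ys" and zs: "letok S I zs"
  shows "fp_mult S (fp_mult S xs ys) zs = fp_mult S xs (fp_mult S ys zs)"
proof (cases "xs = [] \<or> ys = [] \<or> zs = []")
  case True then show ?thesis by auto
next
  case False
  then obtain a i x where xe: "xs = a @ [(i, x)]" by (metis rev_exhaust surj_pair)
  obtain k z c where ze: "zs = (k, z) # c" using False by (metis list.exhaust surj_pair)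
  obtain j y b where ye: "ys = (j, y) # b" using False by (metis list.exhaust surj_pair)
  show ?thesis
  proof (cases "b = []")
    case True
    have xc: "x \<in> carrier (S i)" "i \<in> I" using xs xe unfolding letok_def by auto
    have yc: "y \<in> carrier (S j)" "j \<in> I" using ys ye unfolding letok_def by auto
    have zc: "z \<in> carrier (S k)" "k \<in> I" using zs ze unfolding letok_def by auto
    have A: "fp_mult S [(j, y)] ((k, z) # c) = (if j = k then (j, y \<otimes>\<^bsub>S j\<^esub> z) # c else (j, y) # (k, z) # c)"
      using fp_mult_gen[of S "[]" j y k z c] by simp
    have B: "fp_mult S (a @ [(i, x)]) [(j, y)] = (if i = j then a @ [(i, x \<otimes>\<^bsub>S i\<^esub> y)] else a @ [(i, x), (j, y)])"
      using fp_mult_gen[of S a i x j y "[]"] by simp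
    have as: "(x \<otimes>\<^bsub>S i\<^esub> y) \<otimes>\<^bsub>S i\<^esub> z = x \<otimes>\<^bsub>S i\<^esub> (y \<otimes>\<^bsub>S i\<^esub> z)" if "i = j" "j = k"
      using S xc yc zc that unfolding is_semigroup_def by auto
    show ?thesis unfolding xe ze ye True A B
      using as by (auto simp: fp_mult_def butlast_append)
  next
    case False
    then obtain b' l w where be: "b = b' @ [(l, w)]" by (metis rev_exhaust surj_pair)
    have A: "fp_mult S ((j, y) # b' @ [(l, w)]) ((k, z) # c) =
       (j, y) # (if l = k then b' @ (l, w \<otimes>\<^bsub>S l\<^esub> z) # c else b' @ (l, w) # (k, z) # c)"
      using fp_mult_gen[of S "(j, y) # b'" l w k z c] by simp
    have B: "fp_mult S (a @ [(i, x)]) ((j, y) # b' @ [(l, w)]) =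
       (if i = j then a @ (i, x \<otimes>\<^bsub>S i\<^esub> y) # b' @ [(l, w)] else a @ (i, x) # (j, y) # b' @ [(l, w)])"
      using fp_mult_gen[of S a i x j y "b' @ [(l, w)]"] by simp
    show ?thesis unfolding xe ze ye be A B
      using fp_mult_gen[of S "a @ (i, x \<otimes>\<^bsub>S i\<^esub> y) # b'" l w k z c]
        fp_mult_gen[of S "a @ (i, x) # (j, y) # b'" l w k z c]
        fp_mult_gen[of S a i x j y "b' @ (l, w \<otimes>\<^bsub>S l\<^esub> z) # c"]
        fp_mult_gen[of S a i x j y "b' @ (l, w) # (k, z) # c"]
      by auto
  qed
qed


lemma okw_letok: "okw S I xs \<Longrightarrow> letok S I xs"
  unfolding okw_def letok_def by auto

lemma fp_closed:
  assumes S: "\<forall>i\<in>I. is_semigroup (S i)"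
    and xs: "xs \<in> fp_carrier S I" and ys: "ys \<in> fp_carrier S I"
  shows "fp_mult S xs ys \<in> fp_carrier S I"
proof -
  obtain a i x where xe: "xs = a @ [(i, x)]" using xs unfolding fp_carrier_okw by (metis rev_exhaust surj_pair)
  obtain j y c where ye: "ys = (j, y) # c" using ys unfolding fp_carrier_okw by (metis list.exhaust surj_pair)
  have ox: "okw S I (a @ [(i, x)])" and oy: "okw S I ((j, y) # c)" using xs ys xe ye fp_carrier_okw by auto
  show ?thesis
  proof (cases "i = j")
    case True
    have "x \<in> carrier (S i)" "y \<in> carrier (S i)" "i \<in> I" using ox oy True unfolding okw_def by auto
    then have "x \<otimes>\<^bsub>S i\<^esub> y \<in> carrier (S i)" using S unfolding is_semigroup_def by blast
    then show ?thesis unfolding xe ye True fp_mult_merge fp_carrier_okw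
      using ox oy True unfolding okw_def by (auto simp: successively_append_iff successively_Cons)
  next
    case False
    then show ?thesis unfolding xe ye fp_mult_cat[OF False[symmetric]] fp_carrier_okw
      using ox oy unfolding okw_def by (auto simp: successively_append_iff successively_Cons)
  qed
qed

lemma fp_semigroup:
  assumes S: "\<forall>i\<in>I. is_semigroup (S i)"
  shows "is_semigroup (free_product S I)"
  unfolding is_semigroup_def free_product_def
  using fp_closed[OF S] fp_assoc[OF S] okw_letok fp_carrier_okw by (simp, blast)

lemma fp_mult_length: "length xs + length ys \<le> Suc (length (fp_mult S xs ys))"
  by (auto simp: fp_mult_def)

lemma Fid_struct:
  assumes S: "\<forall>i\<in>I. is_semigroup (S i)" and e: "is_identity (free_product S I) e"
  shows "\<exists>k z. e = [(k, z)] \<and> k \<in> I \<and> is_identity (S k) z \<and> (\<forall>j\<in>I. j \<noteq> k \<longrightarrow> carrier (S j) = {})"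
proof -
  have ec: "e \<in> fp_carrier S I" and eid: "\<forall>x\<in>fp_carrier S I. fp_mult S e x = x \<and> fp_mult S x e = x"
    using e unfolding is_identity_def free_product_def by auto
  have "fp_mult S e e = e" using eid ec by blast
  then have "length e \<le> 1" using fp_mult_length[of e e S] by simp
  moreover have "e \<noteq> []" using ec fp_carrier_okw by blast
  ultimately obtain k z where ez: "e = [(k, z)]" by (cases e) auto
  have kz: "k \<in> I" "z \<in> carrier (S k)" using ec ez unfolding fp_carrier_def by auto
  have sing: "[(j, y)] \<in> fp_carrier S I" if "j \<in> I" "y \<in> carrier (S j)" for j y
    using that unfolding fp_carrier_def by auto
  have "is_identity (S k) z"
    unfolding is_identity_def
  proof (intro conjI ballI)
    show "z \<in> carrier (S k)" by (fact kz(2))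
  next
    fix y assume y: "y \<in> carrier (S k)"
    have "fp_mult S [(k, z)] [(k, y)] = [(k, y)]" "fp_mult S [(k, y)] [(k, z)] = [(k, y)]"
      using eid sing[OF kz(1) y] ez by auto
    then show "z \<otimes>\<^bsub>S k\<^esub> y = y" "y \<otimes>\<^bsub>S k\<^esub> z = y" by (auto simp: fp_mult_def)
  qed
  moreover have "carrier (S j) = {}" if "j \<in> I" "j \<noteq> k" for j
  proof (rule ccontr)
    assume "carrier (S j) \<noteq> {}"
    then obtain y where y: "y \<in> carrier (S j)" by blast
    have "fp_mult S [(k, z)] [(j, y)] = [(j, y)]" using eid sing[OF that(1) y] ez by auto
    then show False using that(2) by (simp add: fp_mult_def)
  qed
  ultimately show ?thesis using ez kz by blast
qed

lemma Fid_words: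
  assumes w: "w \<in> fp_carrier S I" and k: "\<forall>j\<in>I. j \<noteq> k \<longrightarrow> carrier (S j) = {}"
  shows "\<exists>y. w = [(k, y)] \<and> y \<in> carrier (S k)"
proof -
  have all: "fst p = k" if "p \<in> set w" for p
    using w that k unfolding fp_carrier_def by fastforce
  have "length w \<le> 1"
  proof (rule ccontr)
    assume "\<not> length w \<le> 1"
    then have "Suc 0 < length w" by simp
    then have "fst (w ! 0) \<noteq> fst (w ! Suc 0)" using w unfolding fp_carrier_def by blast
    moreover have "w ! 0 \<in> set w" using \<open>Suc 0 < length w\<close> by (intro nth_mem) linarith
    moreover have "w ! Suc 0 \<in> set w" using \<open>Suc 0 < length w\<close> by (intro nth_mem) linarith
    ultimately show False using all by auto
  qed
  moreover have "w \<noteq> []" using w fp_carrier_okw by blast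
  ultimately obtain p where "w = [p]" by (cases w) auto
  then show ?thesis using all w unfolding fp_carrier_def by (cases p) auto
qed


lemma fp_carrier_simp[simp]: "carrier (free_product S I) = fp_carrier S I"
  by (simp add: free_product_def)

lemma fp_mult_simp[simp]: "x \<otimes>\<^bsub>free_product S I\<^esub> y = fp_mult S x y"
  by (simp add: free_product_def)

lemma sing_carrier: "j \<in> I \<Longrightarrow> y \<in> carrier (S j) \<Longrightarrow> [(j, y)] \<in> fp_carrier S I"
  unfolding fp_carrier_def by auto

lemma fp_mult_sing: "fp_mult S [(k, a)] [(k, b)] = [(k, a \<otimes>\<^bsub>S k\<^esub> b)]"
  by (simp add: fp_mult_def)

text \<open>Case where the free product has an identity: it is isomorphic to S k.\<close>

lemma iso_case:
  assumes S: "\<forall>i\<in>I. is_semigroup (S i)" and e: "is_identity (free_product S I) e"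
    and k: "k \<in> I" "is_identity (S k) z" "\<forall>j\<in>I. j \<noteq> k \<longrightarrow> carrier (S j) = {}"
  shows "retr (adjoin_one (free_product S I)) (adjoin_one (S k)) (map_option (\<lambda>y. [(k, y)])) (map_option (\<lambda>w. snd (hd w)))"
    and "retr (adjoin_one (S k)) (adjoin_one (free_product S I)) (map_option (\<lambda>w. snd (hd w))) (map_option (\<lambda>y. [(k, y)]))"
proof -
  have Sk: "is_semigroup (S k)" using S k by blast
  have MF: "monoid (adjoin_one (free_product S I))" using ao_monoid fp_semigroup[OF S] by blast
  have MN: "monoid (adjoin_one (S k))" using ao_monoid Sk by blast
  have cM: "carrier (adjoin_one (free_product S I)) = Some ` fp_carrier S I"
    using ao_carrier_id[OF e] by simp
  have cN: "carrier (adjoin_one (S k)) = Some ` carrier (S k)" using ao_carrier_id[OF k(2)] .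
  have wds: "\<exists>y. w = [(k, y)] \<and> y \<in> carrier (S k)" if "w \<in> fp_carrier S I" for w
    using Fid_words[OF that k(3)] .
  have A1: "map_option (\<lambda>y. [(k, y)]) a \<in> carrier (adjoin_one (free_product S I))"
    if "a \<in> carrier (adjoin_one (S k))" for a
    using that cN cM sing_carrier[where S=S, OF k(1)] by auto
  have A2: "map_option (\<lambda>w. snd (hd w)) a \<in> carrier (adjoin_one (S k))"
    if "a \<in> carrier (adjoin_one (free_product S I))" for a
    using that cN cM wds by fastforce
  have A3: "map_option (\<lambda>y. [(k, y)]) (a \<otimes>\<^bsub>adjoin_one (S k)\<^esub> b) =
      map_option (\<lambda>y. [(k, y)]) a \<otimes>\<^bsub>adjoin_one (free_product S I)\<^esub> map_option (\<lambda>y. [(k, y)]) b"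
    if "a \<in> carrier (adjoin_one (S k))" "b \<in> carrier (adjoin_one (S k))" for a b
    using that cN by (auto simp: fp_mult_sing)
  have A4: "map_option (\<lambda>w. snd (hd w)) (a \<otimes>\<^bsub>adjoin_one (free_product S I)\<^esub> b) =
      map_option (\<lambda>w. snd (hd w)) a \<otimes>\<^bsub>adjoin_one (S k)\<^esub> map_option (\<lambda>w. snd (hd w)) b"
    if ha: "a \<in> carrier (adjoin_one (free_product S I))" and hb: "b \<in> carrier (adjoin_one (free_product S I))" for a b
  proof -
    obtain wa wb where "a = Some wa" "wa \<in> fp_carrier S I" "b = Some wb" "wb \<in> fp_carrier S I"
      using ha hb cM by auto
    moreover obtain x where "wa = [(k, x)]" using wds \<open>wa \<in> fp_carrier S I\<close> by auto
    moreover obtain y where "wb = [(k, y)]" using wds \<open>wb \<in> fp_carrier S I\<close> by auto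
    ultimately show ?thesis by (simp add: fp_mult_sing)
  qed
  have A5: "map_option (\<lambda>w. snd (hd w)) (map_option (\<lambda>y. [(k, y)]) a) = a" for a
    by (cases a) auto
  have A6: "map_option (\<lambda>y. [(k, y)]) (map_option (\<lambda>w. snd (hd w)) a) = a"
    if "a \<in> carrier (adjoin_one (free_product S I))" for a
    using that cM wds by fastforce
  show "retr (adjoin_one (free_product S I)) (adjoin_one (S k)) (map_option (\<lambda>y. [(k, y)])) (map_option (\<lambda>w. snd (hd w)))"
    by (rule retr.intro[OF MF MN A1 A3 A2 A4 A5])
  show "retr (adjoin_one (S k)) (adjoin_one (free_product S I)) (map_option (\<lambda>w. snd (hd w))) (map_option (\<lambda>y. [(k, y)]))"
    by (rule retr.intro[OF MN MF A2 A4 A1 A3 A6])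
qed

lemma empty_case:
  assumes S: "\<forall>i\<in>I. is_semigroup (S i)" and Si: "is_semigroup (S i)" and em: "carrier (S i) = {}"
  shows "retr (adjoin_one (free_product S I)) (adjoin_one (S i)) (\<lambda>_. \<one>\<^bsub>adjoin_one (free_product S I)\<^esub>) (\<lambda>_. None)"
proof -
  have MF: "monoid (adjoin_one (free_product S I))" using ao_monoid fp_semigroup[OF S] by blast
  have MN: "monoid (adjoin_one (S i))" using ao_monoid Si by blast
  have ni: "\<not> (\<exists>e. is_identity (S i) e)" using em unfolding is_identity_def by auto
  have cN: "carrier (adjoin_one (S i)) = {None}" using ao_carrier_noid[OF ni] em by simp
  show ?thesis
    by (rule retr.intro[OF MF MN]) (use MF MN cN monoid.one_closed monoid.l_one in auto)
qed


fun proj :: "('i \<Rightarrow> ('a, 'b) monoid_scheme) \<Rightarrow> 'i \<Rightarrow> ('i \<times> 'a) list \<Rightarrow> 'a option" where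
  "proj S i [] = None"
| "proj S i (p # w) = (if fst p = i then Some (snd p) else None) \<otimes>\<^bsub>adjoin_one (S i)\<^esub> proj S i w"

lemma fp_letok: "xs \<in> fp_carrier S I \<Longrightarrow> letok S I xs"
  unfolding fp_carrier_def letok_def by auto

definition Lt :: "'i \<Rightarrow> 'i \<times> 'a \<Rightarrow> 'a option" where
  "Lt i p = (if fst p = i then Some (snd p) else None)"

lemma proj_Cons': "proj S i (p # w) = Lt i p \<otimes>\<^bsub>adjoin_one (S i)\<^esub> proj S i w"
  by (simp add: Lt_def)

lemma Lt_V: "letok S I [p] \<Longrightarrow> Lt i p \<in> V (S i)"
  unfolding letok_def Lt_def V_def by auto

lemma letok_Cons: "letok S I (p # w) \<longleftrightarrow> letok S I [p] \<and> letok S I w"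
  unfolding letok_def by auto

lemma letok_append: "letok S I (xs @ ys) \<longleftrightarrow> letok S I xs \<and> letok S I ys"
  unfolding letok_def by auto

lemma proj_V:
  assumes Si: "is_semigroup (S i)"
  shows "letok S I w \<Longrightarrow> proj S i w \<in> V (S i)"
proof (induction w)
  case Nil then show ?case by (simp add: V_def)
next
  case (Cons p w)
  then show ?case unfolding proj_Cons' using V_closed[OF Si] Lt_V letok_Cons by metis
qed

lemma proj_append:
  assumes Si: "is_semigroup (S i)"
  shows "letok S I xs \<Longrightarrow> letok S I ys \<Longrightarrow>
    proj S i (xs @ ys) = proj S i xs \<otimes>\<^bsub>adjoin_one (S i)\<^esub> proj S i ys"
proof (induction xs)
  case Nil then show ?case by simp
next
  case (Cons p xs)
  have "Lt i p \<in> V (S i)" "proj S i xs \<in> V (S i)" "proj S i ys \<in> V (S i)"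
    using Cons.prems Lt_V proj_V[where S=S and i=i, OF Si] letok_Cons by metis+
  then show ?case unfolding proj_Cons' append_Cons using Cons V_assoc[OF Si] letok_Cons by metis
qed

lemma Lt_mult:
  "Lt i (j, x \<otimes>\<^bsub>S j\<^esub> y) = Lt i (j, x) \<otimes>\<^bsub>adjoin_one (S i)\<^esub> Lt i (j, y)"
  unfolding Lt_def by auto

lemma proj_mult:
  assumes S: "\<forall>i\<in>I. is_semigroup (S i)" and Si: "is_semigroup (S i)"
    and xs: "letok S I xs" and ys: "letok S I ys"
  shows "proj S i (fp_mult S xs ys) = proj S i xs \<otimes>\<^bsub>adjoin_one (S i)\<^esub> proj S i ys"
proof (cases "xs = [] \<or> ys = []")
  case True then show ?thesis by auto
next
  case False
  then obtain a j x where xe: "xs = a @ [(j, x)]" by (metis rev_exhaust surj_pair)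
  obtain l y c where ye: "ys = (l, y) # c" using False by (metis list.exhaust surj_pair)
  have la: "letok S I a" "letok S I [(j, x)]" using xs xe letok_append by metis+
  have lc: "letok S I [(l, y)]" "letok S I c" using ys ye letok_Cons by metis+
  have V: "proj S i a \<in> V (S i)" "proj S i c \<in> V (S i)" "Lt i (j, x) \<in> V (S i)" "Lt i (l, y) \<in> V (S i)"
    using proj_V[where S=S and i=i, OF Si] la lc Lt_V by metis+
  show ?thesis
  proof (cases "j = l")
    case True
    have "proj S i (fp_mult S xs ys) = proj S i a \<otimes>\<^bsub>adjoin_one (S i)\<^esub>
        ((Lt i (j, x) \<otimes>\<^bsub>adjoin_one (S i)\<^esub> Lt i (l, y)) \<otimes>\<^bsub>adjoin_one (S i)\<^esub> proj S i c)"
    proof -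
      have j: "j \<in> I" "x \<in> carrier (S j)" "y \<in> carrier (S j)" using la lc True unfolding letok_def by auto
      then have xy: "x \<otimes>\<^bsub>S j\<^esub> y \<in> carrier (S j)" using S unfolding is_semigroup_def by blast
      have "letok S I ((j, x \<otimes>\<^bsub>S j\<^esub> y) # c)" using lc xy j unfolding letok_def by auto
      then have "proj S i (a @ (j, x \<otimes>\<^bsub>S j\<^esub> y) # c) = proj S i a \<otimes>\<^bsub>adjoin_one (S i)\<^esub> proj S i ((j, x \<otimes>\<^bsub>S j\<^esub> y) # c)"
        using proj_append[where S=S and i=i, OF Si la(1)] by blast
      then show ?thesis unfolding xe ye True fp_mult_merge proj_Cons' Lt_mult by simp
    qed
    also have "\<dots> = proj S i xs \<otimes>\<^bsub>adjoin_one (S i)\<^esub> proj S i ys"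
    proof -
      have "proj S i xs = proj S i a \<otimes>\<^bsub>adjoin_one (S i)\<^esub> Lt i (j, x)"
        unfolding xe using proj_append[where S=S and i=i, OF Si la] by (simp add: Lt_def)
      moreover have "proj S i ys = Lt i (l, y) \<otimes>\<^bsub>adjoin_one (S i)\<^esub> proj S i c"
        unfolding ye proj_Cons' ..
      ultimately show ?thesis using V V_assoc[OF Si] V_closed[OF Si] by metis
    qed
    finally show ?thesis .
  next
    case False
    then show ?thesis unfolding xe ye fp_mult_cat[OF False[symmetric]]
      using proj_append[where S=S and i=i, OF Si] xs ys xe ye by (metis append.assoc append_Cons append_Nil)
  qed
qed

definition Pr :: "('i \<Rightarrow> ('a, 'b) monoid_scheme) \<Rightarrow> 'i \<Rightarrow> ('i \<times> 'a) list option \<Rightarrow> 'a option" where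
  "Pr S i b = (case b of None \<Rightarrow> None | Some w \<Rightarrow> proj S i w) \<otimes>\<^bsub>adjoin_one (S i)\<^esub> \<one>\<^bsub>adjoin_one (S i)\<^esub>"

lemma times_one_carrier: "x \<in> V S \<Longrightarrow> x \<otimes>\<^bsub>adjoin_one S\<^esub> \<one>\<^bsub>adjoin_one S\<^esub> \<in> carrier (adjoin_one S)"
proof (cases "\<exists>e. is_identity S e")
  case True
  then obtain e where e: "is_identity S e" by blast
  assume "x \<in> V S"
  then show ?thesis using ao_one_id[OF e] ao_carrier_id[OF e] e unfolding V_def is_identity_def
    by (auto simp: ao_mult split: option.splits)
next
  case False
  assume "x \<in> V S"
  then show ?thesis using ao_one_noid[OF False] ao_carrier_noid[OF False] unfolding V_def by simp
qed

lemma noid_case: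
  assumes S: "\<forall>i\<in>I. is_semigroup (S i)" and i: "i \<in> I" and nF: "\<not> (\<exists>e. is_identity (free_product S I) e)"
  shows "retr (adjoin_one (free_product S I)) (adjoin_one (S i)) (map_option (\<lambda>y. [(i, y)])) (Pr S i)"
proof -
  have Si: "is_semigroup (S i)" using S i by blast
  define M where "M = adjoin_one (free_product S I)"
  define N where "N = adjoin_one (S i)"
  have MF: "monoid M" unfolding M_def using ao_monoid fp_semigroup[OF S] by blast
  have MN: "monoid N" unfolding N_def using ao_monoid Si by blast
  have cM: "carrier M = insert None (Some ` fp_carrier S I)" unfolding M_def using ao_carrier_noid[OF nF] by simp
  define Q where "Q b = (case b of None \<Rightarrow> None | Some w \<Rightarrow> proj S i w)" for b
  have PQ: "Pr S i b = Q b \<otimes>\<^bsub>N\<^esub> \<one>\<^bsub>N\<^esub>" for b unfolding Pr_def Q_def N_def ..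
  have QV: "Q b \<in> V (S i)" if "b \<in> carrier M" for b
  proof (cases b)
    case None then show ?thesis unfolding Q_def V_def by simp
  next
    case (Some x)
    then have "x \<in> fp_carrier S I" using that cM by auto
    then have "letok S I x" using okw_letok fp_carrier_okw by blast
    then show ?thesis using Some proj_V[where S=S and i=i, OF Si] unfolding Q_def by simp
  qed
  have Qm: "Q (a \<otimes>\<^bsub>M\<^esub> b) = Q a \<otimes>\<^bsub>N\<^esub> Q b" if "a \<in> carrier M" "b \<in> carrier M" for a b
  proof (cases a)
    case None then show ?thesis unfolding Q_def M_def N_def by simp
  next
    case (Some wa)
    show ?thesis
    proof (cases b)
      case None then show ?thesis unfolding Q_def M_def N_def by simp
    next
      case (Some wb)
      have "wa \<in> fp_carrier S I" "wb \<in> fp_carrier S I" using that cM \<open>a = Some wa\<close> Some by auto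
      then have "letok S I wa" "letok S I wb" using fp_letok by auto
      then show ?thesis using \<open>a = Some wa\<close> Some proj_mult[where S=S and i=i, OF S Si] unfolding Q_def M_def N_def by simp
    qed
  qed
  have one_V: "\<one>\<^bsub>N\<^esub> \<in> V (S i)" unfolding N_def by (rule one_V)
  have A1: "map_option (\<lambda>y. [(i, y)]) a \<in> carrier M" if "a \<in> carrier N" for a
  proof (cases a)
    case None then show ?thesis using cM by simp
  next
    case (Some y)
    then have "y \<in> carrier (S i)" using that ao_Some_iff[THEN iffD1] unfolding N_def by metis
    then show ?thesis using Some cM sing_carrier[where S = S, OF i] by simp
  qed
  have A3: "map_option (\<lambda>y. [(i, y)]) (a \<otimes>\<^bsub>N\<^esub> b) = map_option (\<lambda>y. [(i, y)]) a \<otimes>\<^bsub>M\<^esub> map_option (\<lambda>y. [(i, y)]) b"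
    for a b unfolding M_def N_def by (cases a; cases b) (auto simp: fp_mult_sing)
  have A2: "Pr S i a \<in> carrier N" if "a \<in> carrier M" for a
    unfolding PQ N_def using times_one_carrier QV[OF that] by blast
  have A4: "Pr S i (a \<otimes>\<^bsub>M\<^esub> b) = Pr S i a \<otimes>\<^bsub>N\<^esub> Pr S i b" if "a \<in> carrier M" "b \<in> carrier M" for a b
  proof -
    have qa: "Q a \<in> V (S i)" and qb: "Q b \<in> V (S i)" using QV that by auto
    have qb1: "Q b \<otimes>\<^bsub>N\<^esub> \<one>\<^bsub>N\<^esub> \<in> carrier N" using times_one_carrier[OF qb] unfolding N_def .
    have "Pr S i a \<otimes>\<^bsub>N\<^esub> Pr S i b = Q a \<otimes>\<^bsub>N\<^esub> (\<one>\<^bsub>N\<^esub> \<otimes>\<^bsub>N\<^esub> (Q b \<otimes>\<^bsub>N\<^esub> \<one>\<^bsub>N\<^esub>))"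
      unfolding PQ N_def using V_assoc[OF Si qa one_V[unfolded N_def]] V_closed[OF Si qb one_V[unfolded N_def]] by simp
    also have "\<dots> = Q a \<otimes>\<^bsub>N\<^esub> (Q b \<otimes>\<^bsub>N\<^esub> \<one>\<^bsub>N\<^esub>)" using one_left_V[OF qb1[unfolded N_def]] unfolding N_def by simp
    also have "\<dots> = (Q a \<otimes>\<^bsub>N\<^esub> Q b) \<otimes>\<^bsub>N\<^esub> \<one>\<^bsub>N\<^esub>" using V_assoc[OF Si qa qb one_V[unfolded N_def]] unfolding N_def by simp
    also have "\<dots> = Pr S i (a \<otimes>\<^bsub>M\<^esub> b)" unfolding PQ using Qm[OF that] by simp
    finally show ?thesis by simp
  qed
  have A5: "Pr S i (map_option (\<lambda>y. [(i, y)]) a) = a" if "a \<in> carrier N" for a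
  proof (cases a)
    case None
    then have "\<not> (\<exists>e. is_identity (S i) e)" using that ao_None_iff unfolding N_def by metis
    then show ?thesis using None ao_one_noid unfolding Pr_def by simp
  next
    case (Some y)
    have "Some y \<otimes>\<^bsub>N\<^esub> \<one>\<^bsub>N\<^esub> = Some y" using one_right_V that Some unfolding N_def by blast
    then show ?thesis using Some unfolding Pr_def N_def by simp
  qed
  show ?thesis unfolding M_def[symmetric] N_def[symmetric]
    by (rule retr.intro[OF MF MN A1 A3 A2 A4 A5])
qed

theorem dir1:
  assumes S: "\<forall>i\<in>I. is_semigroup (S i)" and i: "i \<in> I"
    and w: "weakly_right_coherent (adjoin_one (free_product S I))"
  shows "weakly_right_coherent (adjoin_one (S i))"
proof (cases "\<exists>e. is_identity (free_product S I) e")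
  case True
  then obtain e where e: "is_identity (free_product S I) e" by blast
  obtain k z where kz: "e = [(k, z)]" "k \<in> I" "is_identity (S k) z" "\<forall>j\<in>I. j \<noteq> k \<longrightarrow> carrier (S j) = {}"
    using Fid_struct[OF S e] by blast
  show ?thesis
  proof (cases "i = k")
    case True
    then show ?thesis using retr.wrc_transfer[OF iso_case(1)[OF S e kz(2-4)] w] by simp
  next
    case False
    then have em: "carrier (S i) = {}" using kz i by blast
    have Si: "is_semigroup (S i)" using S i by blast
    show ?thesis using retr.wrc_transfer[OF empty_case[OF S Si em] w] .
  qed
next
  case False
  show ?thesis using retr.wrc_transfer[OF noid_case[OF S i False] w] .
qed


definition hh :: "'i \<Rightarrow> ('i \<times> 'a) list option \<Rightarrow> 'a option" where
  "hh i b = (case b of None \<Rightarrow> None | Some w \<Rightarrow> (case w of [] \<Rightarrow> None | p # v \<Rightarrow> if fst p = i then Some (snd p) else None))"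

definition tt :: "'i \<Rightarrow> ('i \<times> 'a) list option \<Rightarrow> ('i \<times> 'a) list" where
  "tt i b = (case b of None \<Rightarrow> [] | Some w \<Rightarrow> (case w of [] \<Rightarrow> [] | p # v \<Rightarrow> if fst p = i then v else w))"

definition mx :: "('i \<Rightarrow> ('a, 'b) monoid_scheme) \<Rightarrow> 'i \<Rightarrow> 'a \<Rightarrow> 'a option \<Rightarrow> 'a" where
  "mx S i x h = (case h of None \<Rightarrow> x | Some y \<Rightarrow> x \<otimes>\<^bsub>S i\<^esub> y)"

definition tau :: "('i \<times> 'a) list \<Rightarrow> ('i \<times> 'a) list option" where
  "tau v = (if v = [] then None else Some v)"

definition io :: "'i \<Rightarrow> 'a option \<Rightarrow> ('i \<times> 'a) list option" where
  "io i p = map_option (\<lambda>y. [(i, y)]) p"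

lemma mx_N: "Some (mx S i x h) = Some x \<otimes>\<^bsub>adjoin_one (S i)\<^esub> h"
  unfolding mx_def by (cases h) auto

lemma hh_io[simp]: "hh i (io i p) = p" unfolding hh_def io_def by (cases p) auto
lemma tt_io[simp]: "tt i (io i p) = []" unfolding tt_def io_def by (cases p) auto

lemma fp_tail: "(p # v) \<in> fp_carrier S I \<Longrightarrow> v = [] \<or> (v \<in> fp_carrier S I \<and> fst (hd v) \<noteq> fst p)"
  unfolding fp_carrier_okw okw_def by (cases v) (auto simp: successively_Cons)

lemma fp_consE:
  assumes "w \<in> fp_carrier S I"
  obtains j y v where "w = (j, y) # v"
proof -
  obtain p v where "w = p # v" using assms unfolding fp_carrier_def by (cases w) auto
  moreover obtain j y where "p = (j, y)" by (cases p)
  ultimately show ?thesis using that by simp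
qed

locale nofid =
  fixes S :: "'i \<Rightarrow> ('a, 'b) monoid_scheme" and I :: "'i set"
  assumes S: "\<forall>i\<in>I. is_semigroup (S i)"
    and nF: "\<not> (\<exists>e. is_identity (free_product S I) e)"
begin

abbreviation M where "M \<equiv> adjoin_one (free_product S I)"

lemma cM: "carrier M = insert None (Some ` fp_carrier S I)"
  using ao_carrier_noid[OF nF] by simp

lemma MM: "monoid M" using ao_monoid fp_semigroup[OF S] by blast

lemma oneM: "\<one>\<^bsub>M\<^esub> = None" using ao_one_noid[OF nF] .

lemma multM: "Some w \<otimes>\<^bsub>M\<^esub> Some v = Some (fp_mult S w v)" by simp

lemma None_M: "None \<in> carrier M" using cM by simp

lemma Some_M: "Some w \<in> carrier M \<longleftrightarrow> w \<in> fp_carrier S I" using cM by auto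

lemma DEC:
  assumes b: "b \<in> carrier M"
  shows "Some (u @ [(i, x)]) \<otimes>\<^bsub>M\<^esub> b = Some (u @ (i, mx S i x (hh i b)) # tt i b)"
proof (cases b)
  case None then show ?thesis by (simp add: hh_def tt_def mx_def)
next
  case (Some w)
  then have w: "w \<in> fp_carrier S I" using b Some_M by simp
  obtain j y v where we: "w = (j, y) # v" using w by (rule fp_consE)
  show ?thesis
  proof (cases "j = i")
    case True
    then show ?thesis using Some we by (simp add: fp_mult_merge hh_def tt_def mx_def)
  next
    case False
    then show ?thesis using Some we fp_mult_cat[OF False, of S u x y v] by (simp add: hh_def tt_def mx_def)
  qed
qed

definition tok :: "'i \<Rightarrow> ('i \<times> 'a) list \<Rightarrow> bool" where
  "tok i v \<longleftrightarrow> v = [] \<or> (v \<in> fp_carrier S I \<and> fst (hd v) \<noteq> i)"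

lemma TTok:
  assumes b: "b \<in> carrier M"
  shows "tok i (tt i b)"
proof (cases b)
  case None then show ?thesis by (simp add: tt_def tok_def)
next
  case (Some w)
  then have w: "w \<in> fp_carrier S I" using b Some_M by simp
  obtain j y v where we: "w = (j, y) # v" using w by (rule fp_consE)
  show ?thesis
  proof (cases "j = i")
    case True
    then show ?thesis using Some we fp_tail[of "(j, y)" v S I] w by (auto simp: tt_def tok_def)
  next
    case False
    then show ?thesis using Some we w by (simp add: tt_def tok_def)
  qed
qed

lemma tau_carrier: "tok i v \<Longrightarrow> tau v \<in> carrier M"
  unfolding tok_def tau_def using cM by auto

lemma HHok:
  assumes b: "b \<in> carrier M"
  shows "hh i b \<in> V (S i)"
proof (cases b)
  case None then show ?thesis by (simp add: hh_def V_def)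
next
  case (Some w)
  then have w: "w \<in> fp_carrier S I" using b Some_M by simp
  obtain j y v where we: "w = (j, y) # v" using w by (rule fp_consE)
  have "y \<in> carrier (S j)" using w we unfolding fp_carrier_def by auto
  then show ?thesis using Some we by (auto simp: hh_def V_def)
qed

lemma io_carrier: "i \<in> I \<Longrightarrow> p \<in> V (S i) \<Longrightarrow> io i p \<in> carrier M"
  unfolding io_def V_def using cM sing_carrier[where S = S] by auto

lemma io_mult: "io i (p \<otimes>\<^bsub>adjoin_one (S i)\<^esub> q) = io i p \<otimes>\<^bsub>M\<^esub> io i q"
  unfolding io_def by (cases p; cases q) (auto simp: fp_mult_sing)

lemma CONCAT:
  assumes "tok i v"
  shows "Some (u @ [(i, z)]) \<otimes>\<^bsub>M\<^esub> tau v = Some (u @ (i, z) # v)"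
proof (cases "v = []")
  case True then show ?thesis by (simp add: tau_def)
next
  case False
  then obtain j y c where ve: "v = (j, y) # c" by (metis list.exhaust surj_pair)
  then have "j \<noteq> i" using assms False unfolding tok_def by simp
  then show ?thesis using ve fp_mult_cat[of j i S u z y c] by (simp add: tau_def)
qed

lemma RECOMP:
  assumes b: "b \<in> carrier M"
  shows "io i (hh i b) \<otimes>\<^bsub>M\<^esub> tau (tt i b) = b"
proof (cases b)
  case None then show ?thesis by (simp add: hh_def tt_def io_def tau_def)
next
  case (Some w)
  then have w: "w \<in> fp_carrier S I" using b Some_M by simp
  obtain j y v where we: "w = (j, y) # v" using w by (rule fp_consE)
  show ?thesis
  proof (cases "j = i")
    case True
    have "tok i v" using fp_tail[of "(j, y)" v S I] w we True unfolding tok_def by auto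
    then have "Some ([] @ [(i, y)]) \<otimes>\<^bsub>M\<^esub> tau v = Some ([] @ (i, y) # v)" by (rule CONCAT)
    then show ?thesis using Some we True by (simp add: hh_def tt_def io_def)
  next
    case False
    then show ?thesis using Some we by (simp add: hh_def tt_def io_def tau_def)
  qed
qed

end


lemma wordE:
  assumes "w \<in> fp_carrier S I"
  obtains u i x where "w = u @ [(i, x)]" "i \<in> I" "x \<in> carrier (S i)"
proof -
  have "w \<noteq> []" using assms unfolding fp_carrier_def by auto
  then obtain u p where "w = u @ [p]" by (metis rev_exhaust)
  moreover obtain i x where "p = (i, x)" by (cases p)
  moreover have "p \<in> set w" using \<open>w = u @ [p]\<close> by simp
  ultimately show ?thesis using that assms unfolding fp_carrier_def by auto
qed

lemma kern1: "(a, b) \<in> kern M [c] \<longleftrightarrow> fst a = 0 \<and> fst b = 0 \<and> snd a \<in> carrier M \<and> snd b \<in> carrier M \<and>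
    c \<otimes>\<^bsub>M\<^esub> snd a = c \<otimes>\<^bsub>M\<^esub> snd b"
  unfolding kern_def by (auto simp: free_act_iff)

lemma V_not_carrier: "p \<in> V S \<Longrightarrow> p \<notin> carrier (adjoin_one S) \<Longrightarrow> p = None"
  unfolding V_def using ao_Some_in by fastforce

context nofid
begin

lemma kern_None: "fg_right_cong_free M 1 (kern M [None])"
proof -
  have H: "({} :: ((nat \<times> ('i \<times> 'a) list option) \<times> (nat \<times> ('i \<times> 'a) list option)) set) \<subseteq> free_act M 1 \<times> free_act M 1" by simp
  have r: "right_cong_free M 1 (cong_gen_free M 1 {})" using cong_gen_rc[OF MM H] .
  have kr: "right_cong_free M 1 (kern M [None])" using kern_rc[OF MM, of "[None]"] None_M by simp
  have "kern M [None] \<subseteq> cong_gen_free M 1 {}"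
  proof
    fix p assume "p \<in> kern M [None]"
    then obtain x y where pe: "p = (x, y)" "x \<in> free_act M 1" "y \<in> free_act M 1"
       "[None] ! fst x \<otimes>\<^bsub>M\<^esub> snd x = [None] ! fst y \<otimes>\<^bsub>M\<^esub> snd y"
      unfolding kern_def by auto
    then have "fst x = 0" "fst y = 0" by (auto simp: free_act_iff)
    then have "snd x = snd y" using pe(4) by simp
    then have "x = y" using \<open>fst x = 0\<close> \<open>fst y = 0\<close> by (simp add: prod_eq_iff)
    then show "p \<in> cong_gen_free M 1 {}" using rc_refl[OF r pe(2)] pe by simp
  qed
  moreover have "cong_gen_free M 1 {} \<subseteq> kern M [None]" using cong_gen_least[OF kr] by blast
  ultimately show ?thesis unfolding fg_right_cong_free_def using H by blast
qed

lemma RE_M: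
  assumes reN: "\<forall>i\<in>I. RE (adjoin_one (S i))"
  shows "RE M"
  unfolding RE_def
proof
  fix \<alpha> assume \<alpha>: "\<alpha> \<in> carrier M"
  show "fg_right_cong_free M 1 (kern M [\<alpha>])"
  proof (cases \<alpha>)
    case None then show ?thesis using kern_None by simp
  next
    case (Some w)
    then have w: "w \<in> fp_carrier S I" using \<alpha> Some_M by simp
    obtain u i x where we: "w = u @ [(i, x)]" and i: "i \<in> I" and x: "x \<in> carrier (S i)" using w by (rule wordE)
    define N where "N = adjoin_one (S i)"
    have Si: "is_semigroup (S i)" using S i by blast
    have MN: "monoid N" unfolding N_def using ao_monoid Si by blast
    have xN: "Some x \<in> carrier N" unfolding N_def using x by (rule ao_Some_in)
    have cNV: "p \<in> V (S i)" if "p \<in> carrier N" for p using that carrier_V unfolding N_def by blast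
    have "RE N" using reN i unfolding N_def by simp
    then have "fg_right_cong_free N 1 (kern N [Some x])" using xN unfolding RE_def by simp
    then obtain HN where HN: "finite HN" "HN \<subseteq> free_act N 1 \<times> free_act N 1" "kern N [Some x] = cong_gen_free N 1 HN"
      unfolding fg_right_cong_free_def by (elim exE conjE) assumption
    define \<theta> where "\<theta> z = (fst z, io i (snd z))" for z :: "nat \<times> 'a option"
    define G where "G = (\<lambda>(a, b). (\<theta> a, \<theta> b)) ` HN \<union> {((0, None), (0, io i \<one>\<^bsub>N\<^esub>))}"
    have oneN: "\<one>\<^bsub>N\<^esub> \<in> carrier N" unfolding N_def by (rule one_carrier)
    have ioc: "io i p \<in> carrier M" if "p \<in> carrier N" for p using io_carrier[OF i cNV[OF that]] .
    have thfa: "\<theta> z \<in> free_act M 1" if "z \<in> free_act N 1" for z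
      using that ioc unfolding \<theta>_def by (auto simp: free_act_iff)
    have finG: "finite G" unfolding G_def using HN(1) by auto
    have Gsub: "G \<subseteq> free_act M 1 \<times> free_act M 1"
      unfolding G_def using HN(2) thfa None_M ioc[OF oneN] by (auto simp: free_act_iff)
    define \<rho> where "\<rho> = cong_gen_free M 1 G"
    have r: "right_cong_free M 1 \<rho>" unfolding \<rho>_def by (rule cong_gen_rc[OF MM Gsub])
    have Gr: "G \<subseteq> \<rho>" unfolding \<rho>_def by (rule cong_gen_incl)
    have kr: "right_cong_free M 1 (kern M [\<alpha>])" using kern_rc[OF MM, of "[\<alpha>]"] \<alpha> by simp
    have Aio: "\<alpha> \<otimes>\<^bsub>M\<^esub> io i p = Some (u @ [(i, mx S i x p)])" if "p \<in> carrier N" for p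
      using DEC[OF ioc[OF that], of u i x] Some we by simp
    have Gk: "G \<subseteq> kern M [\<alpha>]"
    proof
      fix q assume q: "q \<in> G"
      show "q \<in> kern M [\<alpha>]"
      proof (cases "q \<in> (\<lambda>(a, b). (\<theta> a, \<theta> b)) ` HN")
        case True
        then obtain a b where ab: "(a, b) \<in> HN" and qe: "q = (\<theta> a, \<theta> b)" by auto
        have "(a, b) \<in> kern N [Some x]" using ab HN(3) cong_gen_incl by blast
        then have k: "fst a = 0" "fst b = 0" "Some x \<otimes>\<^bsub>N\<^esub> snd a = Some x \<otimes>\<^bsub>N\<^esub> snd b"
          and sa: "snd a \<in> carrier N" "snd b \<in> carrier N"
          unfolding kern1 by auto
        have "Some (mx S i x (snd a)) = Some (mx S i x (snd b))" using k(3) mx_N unfolding N_def by metis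
        then have "\<alpha> \<otimes>\<^bsub>M\<^esub> io i (snd a) = \<alpha> \<otimes>\<^bsub>M\<^esub> io i (snd b)" using Aio[OF sa(1)] Aio[OF sa(2)] by simp
        then show ?thesis unfolding qe kern1 using ioc sa k(1,2) by (simp add: \<theta>_def)
      next
        case False
        then have qe: "q = ((0, None), (0, io i \<one>\<^bsub>N\<^esub>))" using q unfolding G_def by auto
        have "Some (mx S i x \<one>\<^bsub>N\<^esub>) = Some x" using mx_N one_right_V[OF xN[unfolded N_def]] unfolding N_def by metis
        then have "\<alpha> \<otimes>\<^bsub>M\<^esub> io i \<one>\<^bsub>N\<^esub> = \<alpha> \<otimes>\<^bsub>M\<^esub> None" using Aio[OF oneN] Some we by simp
        then show ?thesis unfolding qe kern1 using None_M ioc[OF oneN] by simp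
      qed
    qed
    define hat where "hat b = (if hh i b \<in> carrier N then hh i b else \<one>\<^bsub>N\<^esub>)" for b
    have hatc: "hat b \<in> carrier N" for b unfolding hat_def using oneN by auto
    have hatmx: "Some x \<otimes>\<^bsub>N\<^esub> hat b = Some (mx S i x (hh i b))" if "b \<in> carrier M" for b
    proof (cases "hh i b \<in> carrier N")
      case True then show ?thesis unfolding hat_def using mx_N[of S i x "hh i b"] unfolding N_def by simp
    next
      case False
      have "hh i b \<in> V (S i)" using HHok[OF that] .
      then have "hh i b = None" using False V_not_carrier unfolding N_def by blast
      moreover have "Some x \<otimes>\<^bsub>N\<^esub> \<one>\<^bsub>N\<^esub> = Some x" using one_right_V[OF xN[unfolded N_def]] unfolding N_def .
      ultimately show ?thesis unfolding hat_def using False by (simp add: mx_def)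
    qed
    have c1: "((0, io i (hh i b)), (0, io i (hat b))) \<in> \<rho>" if "b \<in> carrier M" for b
    proof (cases "hh i b \<in> carrier N")
      case True
      then show ?thesis unfolding hat_def using rc_refl[OF r] ioc[OF True] by (simp add: free_act_iff)
    next
      case False
      have "hh i b \<in> V (S i)" using HHok[OF that] .
      then have "hh i b = None" using False V_not_carrier unfolding N_def by blast
      then show ?thesis unfolding hat_def using False Gr unfolding G_def by (simp add: io_def)
    qed
    have tm: "\<theta> (fst z, snd z \<otimes>\<^bsub>N\<^esub> s) = (fst (\<theta> z), snd (\<theta> z) \<otimes>\<^bsub>M\<^esub> io i s) \<and> io i s \<in> carrier M"
      if "z \<in> free_act N 1" "s \<in> carrier N" for z s
      using io_mult ioc[OF that(2)] unfolding \<theta>_def N_def by simp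
    have hhG: "(\<theta> a, \<theta> b) \<in> \<rho>" if "(a, b) \<in> HN" for a b using that Gr unfolding G_def by blast
    have "kern M [\<alpha>] \<subseteq> \<rho>"
    proof
      fix q assume "q \<in> kern M [\<alpha>]"
      then obtain \<beta> \<gamma> where qe: "q = ((0, \<beta>), (0, \<gamma>))" and bc: "\<beta> \<in> carrier M" "\<gamma> \<in> carrier M"
        and eq: "\<alpha> \<otimes>\<^bsub>M\<^esub> \<beta> = \<alpha> \<otimes>\<^bsub>M\<^esub> \<gamma>"
        unfolding kern_def by (auto simp: free_act_iff)
      have "Some (u @ (i, mx S i x (hh i \<beta>)) # tt i \<beta>) = Some (u @ (i, mx S i x (hh i \<gamma>)) # tt i \<gamma>)"
        using eq DEC[OF bc(1), of u i x] DEC[OF bc(2), of u i x] Some we by simp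
      then have e1: "mx S i x (hh i \<beta>) = mx S i x (hh i \<gamma>)" and e2: "tt i \<beta> = tt i \<gamma>" by auto
      have "Some x \<otimes>\<^bsub>N\<^esub> hat \<beta> = Some x \<otimes>\<^bsub>N\<^esub> hat \<gamma>" using hatmx[OF bc(1)] hatmx[OF bc(2)] e1 by simp
      then have "((0, hat \<beta>), (0, hat \<gamma>)) \<in> kern N [Some x]" unfolding kern_def using hatc by (auto simp: free_act_iff)
      then have "((0, hat \<beta>), (0, hat \<gamma>)) \<in> cong_gen_free N 1 HN" using HN(3) by simp
      from cong_gen_map[OF MN HN(2) r thfa tm hhG this]
      have c2: "((0, io i (hat \<beta>)), (0, io i (hat \<gamma>))) \<in> \<rho>" unfolding \<theta>_def by simp
      have c3: "((0, io i (hh i \<beta>)), (0, io i (hh i \<gamma>))) \<in> \<rho>"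
        using rc_trans[OF r c1[OF bc(1)] rc_trans[OF r c2 rc_sym[OF r c1[OF bc(2)]]]] .
      have tc: "tau (tt i \<beta>) \<in> carrier M" using tau_carrier[OF TTok[OF bc(1)]] .
      have "((0, io i (hh i \<beta>) \<otimes>\<^bsub>M\<^esub> tau (tt i \<beta>)), (0, io i (hh i \<gamma>) \<otimes>\<^bsub>M\<^esub> tau (tt i \<beta>))) \<in> \<rho>"
        using rc_mult[OF r c3 tc] .
      moreover have "io i (hh i \<beta>) \<otimes>\<^bsub>M\<^esub> tau (tt i \<beta>) = \<beta>" using RECOMP[OF bc(1), of i] .
      moreover have "io i (hh i \<gamma>) \<otimes>\<^bsub>M\<^esub> tau (tt i \<beta>) = \<gamma>" using RECOMP[OF bc(2), of i] e2 by simp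
      ultimately show "q \<in> \<rho>" unfolding qe by simp
    qed
    moreover have "\<rho> \<subseteq> kern M [\<alpha>]" unfolding \<rho>_def using cong_gen_least[OF kr Gk] .
    ultimately show ?thesis unfolding fg_right_cong_free_def using finG Gsub \<rho>_def by blast
  qed
qed

end


definition prin :: "('a, 'b) monoid_scheme \<Rightarrow> 'a \<Rightarrow> 'a set" where
  "prin M a = {a \<otimes>\<^bsub>M\<^esub> s | s. s \<in> carrier M}"

definition gset :: "('a, 'b) monoid_scheme \<Rightarrow> 'a set \<Rightarrow> 'a set" where
  "gset M X = {x \<otimes>\<^bsub>M\<^esub> s | x s. x \<in> X \<and> s \<in> carrier M}"

lemma IH_alt: "IH M \<longleftrightarrow> (\<forall>a\<in>carrier M. \<forall>b\<in>carrier M. \<exists>X. finite X \<and> X \<subseteq> carrier M \<and> prin M a \<inter> prin M b = gset M X)"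
  unfolding IH_def prin_def gset_def by simp

lemma prinI: "s \<in> carrier M \<Longrightarrow> a \<otimes>\<^bsub>M\<^esub> s \<in> prin M a"
  unfolding prin_def by blast

lemma prinE: "z \<in> prin M a \<Longrightarrow> (\<And>s. s \<in> carrier M \<Longrightarrow> z = a \<otimes>\<^bsub>M\<^esub> s \<Longrightarrow> P) \<Longrightarrow> P"
  unfolding prin_def by blast

lemma gsetI: "x \<in> X \<Longrightarrow> s \<in> carrier M \<Longrightarrow> x \<otimes>\<^bsub>M\<^esub> s \<in> gset M X"
  unfolding gset_def by blast

lemma gsetE: "z \<in> gset M X \<Longrightarrow> (\<And>x s. x \<in> X \<Longrightarrow> s \<in> carrier M \<Longrightarrow> z = x \<otimes>\<^bsub>M\<^esub> s \<Longrightarrow> P) \<Longrightarrow> P"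
  unfolding gset_def by blast

lemma prin_self: "monoid M \<Longrightarrow> a \<in> carrier M \<Longrightarrow> a \<in> prin M a"
  using prinI[of "\<one>\<^bsub>M\<^esub>" M a] by (simp add: monoid.one_closed monoid.r_one)

lemma prin_sub: "monoid M \<Longrightarrow> a \<in> carrier M \<Longrightarrow> b \<in> prin M a \<Longrightarrow> prin M b \<subseteq> prin M a"
proof
  fix z assume M: "monoid M" and a: "a \<in> carrier M" and b: "b \<in> prin M a" and z: "z \<in> prin M b"
  obtain s where s: "s \<in> carrier M" "b = a \<otimes>\<^bsub>M\<^esub> s" using b by (rule prinE)
  obtain t where t: "t \<in> carrier M" "z = b \<otimes>\<^bsub>M\<^esub> t" using z by (rule prinE)
  have "z = a \<otimes>\<^bsub>M\<^esub> (s \<otimes>\<^bsub>M\<^esub> t)" using s t M a by (simp add: monoid.m_assoc)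
  moreover have "s \<otimes>\<^bsub>M\<^esub> t \<in> carrier M" using s t M by (simp add: monoid.m_closed)
  ultimately show "z \<in> prin M a" using prinI by metis
qed

lemma prin_carrier: "monoid M \<Longrightarrow> a \<in> carrier M \<Longrightarrow> prin M a \<subseteq> carrier M"
  unfolding prin_def by (auto simp: monoid.m_closed)

lemma gset_single: "gset M {a} = prin M a"
  unfolding gset_def prin_def by blast

lemma gset_empty: "gset M {} = {}"
  unfolding gset_def by blast

lemma IHP_sub:
  assumes "monoid M" "a \<in> carrier M" "b \<in> carrier M" "prin M b \<subseteq> prin M a"
  shows "\<exists>X. finite X \<and> X \<subseteq> carrier M \<and> prin M a \<inter> prin M b = gset M X"
proof (intro exI conjI)
  show "finite {b}" "{b} \<subseteq> carrier M" using assms by auto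
  show "prin M a \<inter> prin M b = gset M {b}" unfolding gset_single using assms(4) by (rule Int_absorb1)
qed

lemma IHP_empty:
  assumes "prin M a \<inter> prin M b = {}"
  shows "\<exists>X. finite X \<and> X \<subseteq> carrier M \<and> prin M a \<inter> prin M b = gset M X"
  by (rule exI[of _ "{}"]) (simp add: assms gset_empty)

lemma fp_lastrep: "u @ [(i, x)] \<in> fp_carrier S I \<Longrightarrow> z \<in> carrier (S i) \<Longrightarrow> u @ [(i, z)] \<in> fp_carrier S I"
  unfolding fp_carrier_okw okw_def by (auto simp: successively_append_iff)

lemma fp_suffix: "a @ w \<in> fp_carrier S I \<Longrightarrow> w \<noteq> [] \<Longrightarrow> w \<in> fp_carrier S I"
  unfolding fp_carrier_okw okw_def by (auto simp: successively_append_iff)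

lemma hat_lemma:
  assumes Si: "is_semigroup (S i)" and x: "x \<in> carrier (S i)" and h: "h \<in> V (S i)"
  shows "(if h \<in> carrier (adjoin_one (S i)) then h else \<one>\<^bsub>adjoin_one (S i)\<^esub>) \<in> carrier (adjoin_one (S i))"
    and "Some x \<otimes>\<^bsub>adjoin_one (S i)\<^esub> (if h \<in> carrier (adjoin_one (S i)) then h else \<one>\<^bsub>adjoin_one (S i)\<^esub>)
        = Some (mx S i x h)"
proof -
  show "(if h \<in> carrier (adjoin_one (S i)) then h else \<one>\<^bsub>adjoin_one (S i)\<^esub>) \<in> carrier (adjoin_one (S i))"
    using one_carrier by auto
  have xN: "Some x \<in> carrier (adjoin_one (S i))" using x by (rule ao_Some_in)
  show "Some x \<otimes>\<^bsub>adjoin_one (S i)\<^esub> (if h \<in> carrier (adjoin_one (S i)) then h else \<one>\<^bsub>adjoin_one (S i)\<^esub>)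
        = Some (mx S i x h)"
  proof (cases "h \<in> carrier (adjoin_one (S i))")
    case True then show ?thesis using mx_N[of S i x h] by simp
  next
    case False
    then have "h = None" using V_not_carrier h by blast
    then show ?thesis using False one_right_V[OF xN] by (simp add: mx_def)
  qed
qed


lemma IHP_swap:
  "\<exists>X. finite X \<and> X \<subseteq> carrier M \<and> prin M b \<inter> prin M a = gset M X \<Longrightarrow>
   \<exists>X. finite X \<and> X \<subseteq> carrier M \<and> prin M a \<inter> prin M b = gset M X"
  by (simp add: Int_commute)

lemma last_in_fp: "u @ [(i, x)] \<in> fp_carrier S I \<Longrightarrow> i \<in> I \<and> x \<in> carrier (S i)"
  unfolding fp_carrier_def by auto

context nofid
begin

lemma embin:
  assumes a: "u @ [(i, x)] \<in> fp_carrier S I" and p: "p \<in> carrier (adjoin_one (S i))"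
  shows "Some (u @ [(i, x)]) \<otimes>\<^bsub>M\<^esub> io i p = Some (u @ [(i, mx S i x p)])"
proof -
  have i: "i \<in> I" using last_in_fp[OF a] by blast
  have "io i p \<in> carrier M" using io_carrier[OF i] p carrier_V by blast
  from DEC[OF this, of u i x] show ?thesis by simp
qed

lemma IH_case_eq:
  assumes ihN: "IH (adjoin_one (S i))" and a: "u @ [(i, x)] \<in> fp_carrier S I" and b: "u @ [(i, y)] \<in> fp_carrier S I"
  shows "\<exists>X. finite X \<and> X \<subseteq> carrier M \<and> prin M (Some (u @ [(i, x)])) \<inter> prin M (Some (u @ [(i, y)])) = gset M X"
proof -
  have i: "i \<in> I" and x: "x \<in> carrier (S i)" using last_in_fp[OF a] by auto
  have y: "y \<in> carrier (S i)" using last_in_fp[OF b] by auto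
  define N where "N = adjoin_one (S i)"
  have Si: "is_semigroup (S i)" using S i by blast
  have MN: "monoid N" unfolding N_def using ao_monoid Si by blast
  have xN: "Some x \<in> carrier N" "Some y \<in> carrier N" unfolding N_def using x y by (auto intro: ao_Some_in)
  obtain Y where Y: "finite Y" "Y \<subseteq> carrier N" "prin N (Some x) \<inter> prin N (Some y) = gset N Y"
    using ihN xN unfolding IH_alt N_def by blast
  define \<alpha> where "\<alpha> = Some (u @ [(i, x)])"
  define \<beta> where "\<beta> = Some (u @ [(i, y)])"
  have \<alpha>c: "\<alpha> \<in> carrier M" "\<beta> \<in> carrier M" unfolding \<alpha>_def \<beta>_def using a b Some_M by auto
  define emb where "emb c = Some (u @ [(i, the c)])" for c
  have Ysome: "\<exists>c0. c = Some c0 \<and> c0 \<in> carrier (S i) \<and> c \<in> prin N (Some x) \<and> c \<in> prin N (Some y)" if c: "c \<in> Y" for c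
  proof -
    have cN: "c \<in> carrier N" using c Y(2) by blast
    have "c \<otimes>\<^bsub>N\<^esub> \<one>\<^bsub>N\<^esub> \<in> gset N Y" using gsetI[OF c monoid.one_closed[OF MN]] .
    then have cg: "c \<in> gset N Y" using monoid.r_one[OF MN cN] by simp
    then have ci: "c \<in> prin N (Some x)" "c \<in> prin N (Some y)" using Y(3) by blast+
    obtain p where "p \<in> carrier N" "c = Some x \<otimes>\<^bsub>N\<^esub> p" using ci(1) by (rule prinE)
    then have "c \<noteq> None" unfolding N_def by (cases p) auto
    then obtain c0 where "c = Some c0" by blast
    moreover have "c0 \<in> carrier (S i)" using cN \<open>c = Some c0\<close> ao_Some_iff unfolding N_def by metis
    ultimately show ?thesis using ci by blast
  qed
  have embin2: "emb c \<in> prin M (Some (u @ [(i, z)]))"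
    if ww: "u @ [(i, z)] \<in> fp_carrier S I" and c: "c = Some c0" and cp: "c \<in> prin N (Some z)" for z c c0
  proof -
    obtain p where p: "p \<in> carrier N" "c = Some z \<otimes>\<^bsub>N\<^esub> p" using cp by (rule prinE)
    have "Some (mx S i z p) = Some c0" using mx_N[of S i z p] p(2) c unfolding N_def by simp
    then have "Some (u @ [(i, z)]) \<otimes>\<^bsub>M\<^esub> io i p = emb c"
      using embin[OF ww p(1)[unfolded N_def]] c unfolding emb_def by simp
    moreover have "io i p \<in> carrier M" using io_carrier[OF i] p(1) carrier_V unfolding N_def by blast
    ultimately show ?thesis using prinI by metis
  qed
  have embc: "emb c \<in> carrier M" if cY: "c \<in> Y" for c
  proof -
    obtain c0 where "c = Some c0" "c0 \<in> carrier (S i)" using Ysome[OF cY] by blast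
    then show ?thesis using fp_lastrep[OF a] Some_M unfolding emb_def by simp
  qed
  show ?thesis
  proof (intro exI conjI)
    show "finite (emb ` Y)" using Y(1) by simp
    show "emb ` Y \<subseteq> carrier M" using embc by blast
    show "prin M (Some (u @ [(i, x)])) \<inter> prin M (Some (u @ [(i, y)])) = gset M (emb ` Y)"
    proof (intro equalityI subsetI)
      fix z assume z: "z \<in> prin M (Some (u @ [(i, x)])) \<inter> prin M (Some (u @ [(i, y)]))"
      obtain s where s: "s \<in> carrier M" "z = Some (u @ [(i, x)]) \<otimes>\<^bsub>M\<^esub> s" using z by (blast elim: prinE)
      obtain t where t: "t \<in> carrier M" "z = Some (u @ [(i, y)]) \<otimes>\<^bsub>M\<^esub> t" using z by (blast elim: prinE)
      have "Some (u @ (i, mx S i x (hh i s)) # tt i s) = Some (u @ (i, mx S i y (hh i t)) # tt i t)"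
        using s t DEC[OF s(1), of u i x] DEC[OF t(1), of u i y] by simp
      then have e1: "mx S i x (hh i s) = mx S i y (hh i t)" and e2: "tt i s = tt i t" by auto
      define m where "m = mx S i x (hh i s)"
      have zf: "z = Some (u @ (i, m) # tt i s)" using s DEC[OF s(1), of u i x] unfolding m_def by simp
      have hs: "hh i s \<in> V (S i)" "hh i t \<in> V (S i)" using HHok s(1) t(1) by auto
      note hl1 = hat_lemma[where S=S and i=i, OF Si x hs(1)] and hl2 = hat_lemma[where S=S and i=i, OF Si y hs(2)]
      have "Some m \<in> prin N (Some x)" using prinI[OF hl1(1)] hl1(2) unfolding m_def N_def by metis
      moreover have "Some m \<in> prin N (Some y)" using prinI[OF hl2(1)] hl2(2) e1 unfolding m_def N_def by metis
      ultimately have "Some m \<in> gset N Y" using Y(3) by blast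
      then obtain c w where cw: "c \<in> Y" "w \<in> carrier N" "Some m = c \<otimes>\<^bsub>N\<^esub> w" by (rule gsetE)
      obtain c0 where c0: "c = Some c0" "c0 \<in> carrier (S i)" using Ysome[OF cw(1)] by blast
      have "Some (mx S i c0 w) = Some m" using mx_N[of S i c0 w] cw(3) c0(1) unfolding N_def by simp
      then have mm: "mx S i c0 w = m" by simp
      have wa: "u @ [(i, c0)] \<in> fp_carrier S I" using fp_lastrep[OF a c0(2)] .
      have e3: "emb c \<otimes>\<^bsub>M\<^esub> io i w = Some (u @ [(i, m)])"
        using embin[OF wa cw(2)[unfolded N_def]] c0 mm unfolding emb_def by simp
      have tk: "tok i (tt i s)" using TTok[OF s(1)] .
      have e4: "Some (u @ [(i, m)]) \<otimes>\<^bsub>M\<^esub> tau (tt i s) = z" using CONCAT[OF tk] zf by simp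
      have ioc: "io i w \<in> carrier M" using io_carrier[OF i] cw(2) carrier_V unfolding N_def by blast
      have tc: "tau (tt i s) \<in> carrier M" using tau_carrier[OF tk] .
      have "z = emb c \<otimes>\<^bsub>M\<^esub> (io i w \<otimes>\<^bsub>M\<^esub> tau (tt i s))"
        using e3 e4 monoid.m_assoc[OF MM embc[OF cw(1)] ioc tc] by simp
      moreover have "io i w \<otimes>\<^bsub>M\<^esub> tau (tt i s) \<in> carrier M" using monoid.m_closed[OF MM ioc tc] .
      moreover have "emb c \<in> emb ` Y" using cw(1) by blast
      ultimately show "z \<in> gset M (emb ` Y)" using gsetI by metis
    next
      fix z assume "z \<in> gset M (emb ` Y)"
      then obtain e s where es: "e \<in> emb ` Y" "s \<in> carrier M" "z = e \<otimes>\<^bsub>M\<^esub> s" by (rule gsetE)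
      then obtain c where c: "c \<in> Y" "e = emb c" by blast
      obtain c0 where c0: "c = Some c0" "c0 \<in> carrier (S i)" "c \<in> prin N (Some x)" "c \<in> prin N (Some y)"
        using Ysome[OF c(1)] by blast
      have zp: "z \<in> prin M e" using prinI[OF es(2)] es(3) by simp
      have "e \<in> prin M \<alpha>" using embin2[OF a c0(1) c0(3)] c(2) unfolding \<alpha>_def by simp
      then have z1: "z \<in> prin M \<alpha>" using prin_sub[OF MM \<alpha>c(1)] zp by blast
      have "e \<in> prin M \<beta>" using embin2[OF b c0(1) c0(4)] c(2) unfolding \<beta>_def by simp
      then have z2: "z \<in> prin M \<beta>" using prin_sub[OF MM \<alpha>c(2)] zp by blast
      show "z \<in> prin M (Some (u @ [(i, x)])) \<inter> prin M (Some (u @ [(i, y)]))"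
        using z1 z2 unfolding \<alpha>_def \<beta>_def by blast
    qed
  qed
qed

end


context nofid
begin

lemma IH_case_lt:
  assumes a: "u @ [(i, x)] \<in> fp_carrier S I" and b: "u' @ [(j, y)] \<in> fp_carrier S I"
    and lt: "length u < length u'"
  shows "\<exists>X. finite X \<and> X \<subseteq> carrier M \<and> prin M (Some (u @ [(i, x)])) \<inter> prin M (Some (u' @ [(j, y)])) = gset M X"
proof -
  have i: "i \<in> I" and x: "x \<in> carrier (S i)" using last_in_fp[OF a] by auto
  define N where "N = adjoin_one (S i)"
  have Si: "is_semigroup (S i)" using S i by blast
  define n where "n = length u"
  obtain i' z0 where q: "u' ! n = (i', z0)" by (cases "u' ! n")
  define \<alpha> where "\<alpha> = Some (u @ [(i, x)])"
  define \<beta> where "\<beta> = Some (u' @ [(j, y)])"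
  have \<alpha>c: "\<alpha> \<in> carrier M" "\<beta> \<in> carrier M" unfolding \<alpha>_def \<beta>_def using a b Some_M by auto
  show ?thesis
  proof (cases "take n u' = u \<and> i' = i \<and> (\<exists>p\<in>carrier N. Some z0 = Some x \<otimes>\<^bsub>N\<^esub> p)")
    case True
    then obtain p where p: "p \<in> carrier N" "Some z0 = Some x \<otimes>\<^bsub>N\<^esub> p" and tk: "take n u' = u" and ii: "i' = i" by blast
    have ltn: "n < length u'" using lt n_def by simp
    define r where "r = drop (Suc n) u'"
    have ue: "u' = u @ (i, z0) # r" using id_take_nth_drop[OF ltn] tk q ii unfolding r_def by simp
    define rest where "rest = r @ [(j, y)]"
    have bw: "u' @ [(j, y)] = u @ (i, z0) # rest" unfolding ue rest_def by simp
    have r1: "(i, z0) # rest \<in> fp_carrier S I" using fp_suffix[of u "(i, z0) # rest"] b bw by simp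
    have r2: "rest \<in> fp_carrier S I \<and> fst (hd rest) \<noteq> i" using fp_tail[OF r1] unfolding rest_def by simp
    have tk2: "tok i rest" using r2 unfolding tok_def by blast
    have mxp: "mx S i x p = z0" using mx_N[of S i x p] p(2) unfolding N_def by (metis option.inject)
    have ioc: "io i p \<in> carrier M" using io_carrier[OF i] p(1) carrier_V unfolding N_def by blast
    have tc: "tau rest \<in> carrier M" using tau_carrier[OF tk2] .
    have "\<alpha> \<otimes>\<^bsub>M\<^esub> io i p = Some (u @ [(i, z0)])" using embin[OF a p(1)[unfolded N_def]] mxp unfolding \<alpha>_def by simp
    then have "(\<alpha> \<otimes>\<^bsub>M\<^esub> io i p) \<otimes>\<^bsub>M\<^esub> tau rest = \<beta>" using CONCAT[OF tk2, of u z0] bw unfolding \<beta>_def by simp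
    then have "\<beta> = \<alpha> \<otimes>\<^bsub>M\<^esub> (io i p \<otimes>\<^bsub>M\<^esub> tau rest)" using monoid.m_assoc[OF MM \<alpha>c(1) ioc tc] by simp
    moreover have "io i p \<otimes>\<^bsub>M\<^esub> tau rest \<in> carrier M" using monoid.m_closed[OF MM ioc tc] .
    ultimately have "\<beta> \<in> prin M \<alpha>" using prinI by metis
    then have "prin M \<beta> \<subseteq> prin M \<alpha>" using prin_sub[OF MM \<alpha>c(1)] by blast
    from IHP_sub[OF MM \<alpha>c this] show ?thesis unfolding \<alpha>_def \<beta>_def .
  next
    case False
    have "prin M \<alpha> \<inter> prin M \<beta> = {}"
    proof (rule ccontr)
      assume "prin M \<alpha> \<inter> prin M \<beta> \<noteq> {}"
      then obtain z where z: "z \<in> prin M \<alpha>" "z \<in> prin M \<beta>" by blast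
      obtain s where s: "s \<in> carrier M" "z = \<alpha> \<otimes>\<^bsub>M\<^esub> s" using z(1) by (rule prinE)
      obtain t where t: "t \<in> carrier M" "z = \<beta> \<otimes>\<^bsub>M\<^esub> t" using z(2) by (rule prinE)
      define m where "m = mx S i x (hh i s)"
      have L: "u @ (i, m) # tt i s = u' @ (j, mx S j y (hh j t)) # tt j t"
        using s t DEC[OF s(1), of u i x] DEC[OF t(1), of u' j y] unfolding \<alpha>_def \<beta>_def m_def by simp
      have ltn: "n < length u'" using lt n_def by simp
      have "take n (u @ (i, m) # tt i s) = u" unfolding n_def by simp
      moreover have "take n (u' @ (j, mx S j y (hh j t)) # tt j t) = take n u'" using ltn by simp
      ultimately have tk: "take n u' = u" using L by simp
      have "(u @ (i, m) # tt i s) ! n = (i, m)" unfolding n_def by simp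
      moreover have "(u' @ (j, mx S j y (hh j t)) # tt j t) ! n = (i', z0)" using ltn q by (simp add: nth_append)
      ultimately have iz: "i' = i" "z0 = m" using L by simp_all
      have hs: "hh i s \<in> V (S i)" using HHok s(1) by auto
      note hl = hat_lemma[where S = S and i = i, OF Si x hs]
      define hs' where "hs' = (if hh i s \<in> carrier (adjoin_one (S i)) then hh i s else \<one>\<^bsub>adjoin_one (S i)\<^esub>)"
      have h1: "hs' \<in> carrier N" using hl(1) unfolding hs'_def N_def .
      have "Some x \<otimes>\<^bsub>N\<^esub> hs' = Some m" using hl(2) unfolding hs'_def N_def m_def .
      then have "Some z0 = Some x \<otimes>\<^bsub>N\<^esub> hs'" using iz(2) by simp
      then have "\<exists>p\<in>carrier N. Some z0 = Some x \<otimes>\<^bsub>N\<^esub> p" using h1 by blast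
      then show False using False tk iz by blast
    qed
    then show ?thesis unfolding \<alpha>_def \<beta>_def by (rule IHP_empty)
  qed
qed

lemma IH_M:
  assumes ihN: "\<forall>i\<in>I. IH (adjoin_one (S i))"
  shows "IH M"
  unfolding IH_alt
proof (intro ballI)
  fix \<alpha> \<beta> assume \<alpha>: "\<alpha> \<in> carrier M" and \<beta>: "\<beta> \<in> carrier M"
  have pN: "prin M b \<subseteq> prin M None" if "b \<in> carrier M" for b
  proof
    fix z assume "z \<in> prin M b"
    then have "z \<in> carrier M" using prin_carrier[OF MM that] by blast
    then have "None \<otimes>\<^bsub>M\<^esub> z \<in> prin M None" by (rule prinI)
    then show "z \<in> prin M None" by simp
  qed
  show "\<exists>X. finite X \<and> X \<subseteq> carrier M \<and> prin M \<alpha> \<inter> prin M \<beta> = gset M X"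
  proof (cases \<alpha>)
    case None
    then show ?thesis using IHP_sub[OF MM None_M \<beta> pN[OF \<beta>]] by simp
  next
    case (Some w)
    note \<alpha>e = Some
    show ?thesis
    proof (cases \<beta>)
      case None
      then show ?thesis using IHP_swap[OF IHP_sub[OF MM None_M \<alpha> pN[OF \<alpha>]]] by simp
    next
      case (Some w')
      have w: "w \<in> fp_carrier S I" "w' \<in> fp_carrier S I" using \<alpha> \<beta> \<alpha>e Some Some_M by auto
      obtain u i x where we: "w = u @ [(i, x)]" and i: "i \<in> I" using w(1) by (rule wordE)
      obtain u' j y where we': "w' = u' @ [(j, y)]" using w(2) by (rule wordE)
      have a: "u @ [(i, x)] \<in> fp_carrier S I" and b: "u' @ [(j, y)] \<in> fp_carrier S I" using w we we' by auto
      consider (eq) "length u = length u'" | (lt) "length u < length u'" | (gt) "length u' < length u" by linarith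
      then show ?thesis
      proof cases
        case eq
        show ?thesis
        proof (cases "u = u' \<and> i = j")
          case True
          then show ?thesis using IH_case_eq[of i u x y] ihN i a b \<alpha>e Some we we' by simp
        next
          case False
          have "prin M \<alpha> \<inter> prin M \<beta> = {}"
          proof (rule ccontr)
            assume "prin M \<alpha> \<inter> prin M \<beta> \<noteq> {}"
            then obtain z where z: "z \<in> prin M \<alpha>" "z \<in> prin M \<beta>" by blast
            obtain s where s: "s \<in> carrier M" "z = \<alpha> \<otimes>\<^bsub>M\<^esub> s" using z(1) by (rule prinE)
            obtain t where t: "t \<in> carrier M" "z = \<beta> \<otimes>\<^bsub>M\<^esub> t" using z(2) by (rule prinE)
            have "u @ (i, mx S i x (hh i s)) # tt i s = u' @ (j, mx S j y (hh j t)) # tt j t"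
              using s t DEC[OF s(1), of u i x] DEC[OF t(1), of u' j y] \<alpha>e Some we we' by simp
            then have "u = u' \<and> i = j" using eq by (simp add: append_eq_append_conv)
            then show False using False by blast
          qed
          then show ?thesis by (rule IHP_empty)
        qed
      next
        case lt
        then show ?thesis using IH_case_lt[OF a b] \<alpha>e Some we we' by simp
      next
        case gt
        then show ?thesis using IHP_swap[OF IH_case_lt[OF b a]] \<alpha>e Some we we' by simp
      qed
    qed
  qed
qed

end


theorem dir2:
  assumes S: "\<forall>i\<in>I. is_semigroup (S i)"
    and w: "\<forall>i\<in>I. weakly_right_coherent (adjoin_one (S i))"
  shows "weakly_right_coherent (adjoin_one (free_product S I))"
proof (cases "\<exists>e. is_identity (free_product S I) e")
  case True
  then obtain e where e: "is_identity (free_product S I) e" by blast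
  obtain k z where kz: "e = [(k, z)]" "k \<in> I" "is_identity (S k) z" "\<forall>j\<in>I. j \<noteq> k \<longrightarrow> carrier (S j) = {}"
    using Fid_struct[OF S e] by blast
  have "weakly_right_coherent (adjoin_one (S k))" using w kz(2) by blast
  then show ?thesis using retr.wrc_transfer[OF iso_case(2)[OF S e kz(2-4)]] by blast
next
  case False
  interpret nofid S I by (unfold_locales; fact S False)
  have mono: "monoid (adjoin_one (S i))" if "i \<in> I" for i using ao_monoid S that by blast
  have "\<forall>i\<in>I. RE (adjoin_one (S i))" using w wrc_iff_RE_IH mono by blast
  moreover have "\<forall>i\<in>I. IH (adjoin_one (S i))" using w wrc_iff_RE_IH mono by blast
  ultimately show ?thesis using wrc_if_RE_IH[OF MM RE_M IH_M] by blast
qed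

theorem mainTheorem3:
  fixes S :: "'i \<Rightarrow> 'a monoid" and I :: "'i set"
  assumes "\<forall>i\<in>I. is_semigroup (S i)"
  shows "weakly_right_coherent (adjoin_one (free_product S I)) \<longleftrightarrow>
         (\<forall>i\<in>I. weakly_right_coherent (adjoin_one (S i)))"
  using dir1[OF assms] dir2[OF assms] by blast


end
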